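(* Let $\mathbb T^2=\mathbb R^2/\mathbb Z^2$ carry the flat metric $g$ and area form $\sigma=dx\wedge dy$, and let $\alpha$ be a closed 1-form on $\mathbb T^2$. Let $\omega_\alpha$ be the 2-cocycle on $\mathfrak X_\sigma(\mathbb T^2)$ defined by $\omega_\alpha(H_f,H_h)=\int_{\mathbb T^2}f\,\alpha(H_h)\sigma$ for Hamiltonian vector fields $H_f,H_h$ with Hamiltonian functions $f,h$ of zero integral, and $\omega_\alpha(\partial_x,\partial_y)=\omega_\alpha(\partial_x,H_f)=\omega_\alpha(\partial_y,H_f)=0$. Consider the central extension $\mathbb R\times_{\omega_\alpha}\mathfrak X_\sigma(\mathbb T^2)$ (bracket $[(a,X),(b,Y)]=(\omega_\alpha(X,Y),[X,Y]_{\mathfrak g})$) with scalar product $ab+\int g(X,Y)\sigma$. Then a curve $(a,u)$ with $a=1$ satisfies the Euler equation if and only if there is a time dependent function $p$ with $$\partial_t u=-\nabla_uu-\psi_u\,\alpha^\sharp-\operatorname{grad}p,$$ where $\psi_u$ is the unique function with $d\psi_u=i_u\sigma-\langle i_u\sigma\rangle$ and $\int_{\mathbb T^2}\psi_u\sigma=0$.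
   Context: $\mathfrak X_\sigma(\mathbb T^2)$ is the Lie algebra of symplectic (= divergence free) vector fields with bracket $[X,Y]_{\mathfrak g}$ the negative of the usual vector field bracket. For a 1-form $a\,dx+b\,dy$ on $\mathbb T^2$, its average is $\langle a\,dx+b\,dy\rangle=(\int a\sigma)dx+(\int b\sigma)dy$. $\alpha^\sharp$ is the vector field metrically dual to $\alpha$, $\nabla$ the Levi-Civita connection. The Euler equation in a Lie algebra with scalar product is $\dot w=-\operatorname{ad}(w)^\top w$. *)

theory Defs
  imports "HOL-Analysis.Analysis"
begin

definition Dir :: "'a::real_normed_vector \<Rightarrow> ('a \<Rightarrow> real) \<Rightarrow> 'a \<Rightarrow> real" where
  "Dir v f x = frechet_derivative f (at x) v"

fun pd :: "'a::real_normed_vector list \<Rightarrow> ('a \<Rightarrow> real) \<Rightarrow> 'a \<Rightarrow> real" where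
  "pd [] f = f"
| "pd (v # vs) f = Dir v (pd vs f)"

definition smooth :: "('a::real_normed_vector \<Rightarrow> real) \<Rightarrow> bool" where
  "smooth f \<longleftrightarrow> (\<forall>vs x. pd vs f differentiable (at x))"

type_synonym pt = "real \<times> real"

definition periodic :: "(pt \<Rightarrow> 'b) \<Rightarrow> bool" where
  "periodic f \<longleftrightarrow> (\<forall>x y. f (x + 1, y) = f (x, y) \<and> f (x, y + 1) = f (x, y))"

(* smooth functions on T^2, viewed as Z^2-periodic smooth functions on R^2 *)
definition tfun :: "(pt \<Rightarrow> real) \<Rightarrow> bool" where
  "tfun f \<longleftrightarrow> smooth f \<and> periodic f"

definition Dx :: "(pt \<Rightarrow> real) \<Rightarrow> pt \<Rightarrow> real" where
  "Dx f = Dir (1, 0) f"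

definition Dy :: "(pt \<Rightarrow> real) \<Rightarrow> pt \<Rightarrow> real" where
  "Dy f = Dir (0, 1) f"

(* integral against sigma = dx /\ dy over T^2 (fundamental domain [0,1]^2, total area 1) *)
definition tint :: "(pt \<Rightarrow> real) \<Rightarrow> real" where
  "tint f = integral (cbox (0, 0) (1, 1)) f"

(* vector fields X = X1 d/dx + X2 d/dy, represented by (X1, X2) *)
definition vf :: "(pt \<Rightarrow> pt) \<Rightarrow> bool" where
  "vf X \<longleftrightarrow> tfun (\<lambda>z. fst (X z)) \<and> tfun (\<lambda>z. snd (X z))"

definition divg :: "(pt \<Rightarrow> pt) \<Rightarrow> pt \<Rightarrow> real" where
  "divg X z = Dx (\<lambda>w. fst (X w)) z + Dy (\<lambda>w. snd (X w)) z"

(* X_sigma(T^2): symplectic = divergence free smooth vector fields *)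
definition Xsigma :: "(pt \<Rightarrow> pt) set" where
  "Xsigma = {X. vf X \<and> (\<forall>z. divg X z = 0)}"

definition act :: "(pt \<Rightarrow> pt) \<Rightarrow> (pt \<Rightarrow> real) \<Rightarrow> pt \<Rightarrow> real" where
  "act X f z = fst (X z) * Dx f z + snd (X z) * Dy f z"

definition vf_bracket :: "(pt \<Rightarrow> pt) \<Rightarrow> (pt \<Rightarrow> pt) \<Rightarrow> pt \<Rightarrow> pt" where
  "vf_bracket X Y z =
     (act X (\<lambda>w. fst (Y w)) z - act Y (\<lambda>w. fst (X w)) z,
      act X (\<lambda>w. snd (Y w)) z - act Y (\<lambda>w. snd (X w)) z)"

definition lie_bracket :: "(pt \<Rightarrow> pt) \<Rightarrow> (pt \<Rightarrow> pt) \<Rightarrow> pt \<Rightarrow> pt" where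
  "lie_bracket X Y z = - vf_bracket X Y z"

(* Levi-Civita connection of the flat metric: nabla_X Y *)
definition nabla :: "(pt \<Rightarrow> pt) \<Rightarrow> (pt \<Rightarrow> pt) \<Rightarrow> pt \<Rightarrow> pt" where
  "nabla X Y z = (act X (\<lambda>w. fst (Y w)) z, act X (\<lambda>w. snd (Y w)) z)"

(* 1-forms a dx + b dy, represented by (a, b) *)
definition closed_form :: "(pt \<Rightarrow> pt) \<Rightarrow> bool" where
  "closed_form \<alpha> \<longleftrightarrow> vf \<alpha> \<and> (\<forall>z. Dy (\<lambda>w. fst (\<alpha> w)) z = Dx (\<lambda>w. snd (\<alpha> w)) z)"

definition eval1 :: "(pt \<Rightarrow> pt) \<Rightarrow> (pt \<Rightarrow> pt) \<Rightarrow> pt \<Rightarrow> real" where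
  "eval1 \<alpha> X z = fst (\<alpha> z) * fst (X z) + snd (\<alpha> z) * snd (X z)"

(* metric dual for the flat metric g = dx^2 + dy^2 *)
definition sharp :: "(pt \<Rightarrow> pt) \<Rightarrow> pt \<Rightarrow> pt" where
  "sharp \<alpha> z = \<alpha> z"

definition dfun :: "(pt \<Rightarrow> real) \<Rightarrow> pt \<Rightarrow> pt" where
  "dfun f z = (Dx f z, Dy f z)"

definition grad :: "(pt \<Rightarrow> real) \<Rightarrow> pt \<Rightarrow> pt" where
  "grad f = sharp (dfun f)"

(* i_X sigma = X1 dy - X2 dx *)
definition isigma :: "(pt \<Rightarrow> pt) \<Rightarrow> pt \<Rightarrow> pt" where
  "isigma X z = (- snd (X z), fst (X z))"

definition avg1 :: "(pt \<Rightarrow> pt) \<Rightarrow> pt \<Rightarrow> pt" where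
  "avg1 \<beta> z = (tint (\<lambda>w. fst (\<beta> w)), tint (\<lambda>w. snd (\<beta> w)))"

definition psi :: "(pt \<Rightarrow> pt) \<Rightarrow> pt \<Rightarrow> real" where
  "psi X = (THE \<psi>. tfun \<psi> \<and> (\<forall>z. dfun \<psi> z = isigma X z - avg1 (isigma X) z) \<and> tint \<psi> = 0)"

(* Hamiltonian vector field, convention i_{H_f} sigma = df *)
definition ham :: "(pt \<Rightarrow> real) \<Rightarrow> pt \<Rightarrow> pt" where
  "ham f z = (Dy f z, - Dx f z)"

definition ham_part :: "(pt \<Rightarrow> pt) \<Rightarrow> pt \<Rightarrow> real" where
  "ham_part X = (THE f. tfun f \<and> tint f = 0 \<and> (\<exists>c. \<forall>z. X z = c + ham f z))"

definition omega :: "(pt \<Rightarrow> pt) \<Rightarrow> (pt \<Rightarrow> pt) \<Rightarrow> (pt \<Rightarrow> pt) \<Rightarrow> real" where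
  "omega \<alpha> X Y = tint (\<lambda>z. ham_part X z * eval1 \<alpha> (ham (ham_part Y)) z)"

definition is_2cocycle :: "((pt \<Rightarrow> pt) \<Rightarrow> (pt \<Rightarrow> pt) \<Rightarrow> real) \<Rightarrow> bool" where
  "is_2cocycle \<omega> \<longleftrightarrow>
     (\<forall>X\<in>Xsigma. \<forall>Y\<in>Xsigma. \<omega> X Y = - \<omega> Y X) \<and>
     (\<forall>X\<in>Xsigma. \<forall>Y\<in>Xsigma. \<forall>Z\<in>Xsigma.
        \<omega> (lie_bracket X Y) Z + \<omega> (lie_bracket Y Z) X + \<omega> (lie_bracket Z X) Y = 0)"

type_synonym ext = "real \<times> (pt \<Rightarrow> pt)"

definition ext_alg :: "ext set" where
  "ext_alg = UNIV \<times> Xsigma"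

definition ext_bracket :: "(pt \<Rightarrow> pt) \<Rightarrow> ext \<Rightarrow> ext \<Rightarrow> ext" where
  "ext_bracket \<alpha> w v = (omega \<alpha> (snd w) (snd v), lie_bracket (snd w) (snd v))"

definition ext_inner :: "ext \<Rightarrow> ext \<Rightarrow> real" where
  "ext_inner w v = fst w * fst v + tint (\<lambda>z. snd w z \<bullet> snd v z)"

definition ext_neg :: "ext \<Rightarrow> ext" where
  "ext_neg w = (- fst w, \<lambda>z. - snd w z)"

definition ad_transpose_app :: "(pt \<Rightarrow> pt) \<Rightarrow> ext \<Rightarrow> ext \<Rightarrow> bool" where
  "ad_transpose_app \<alpha> w z \<longleftrightarrow>
     z \<in> ext_alg \<and> (\<forall>v\<in>ext_alg. ext_inner z v = ext_inner w (ext_bracket \<alpha> w v))"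

definition dt :: "(real \<Rightarrow> pt \<Rightarrow> pt) \<Rightarrow> real \<Rightarrow> pt \<Rightarrow> pt" where
  "dt u t z = (deriv (\<lambda>s. fst (u s z)) t, deriv (\<lambda>s. snd (u s z)) t)"

definition smooth_curve :: "(real \<Rightarrow> pt \<Rightarrow> pt) \<Rightarrow> bool" where
  "smooth_curve u \<longleftrightarrow> (\<forall>t. u t \<in> Xsigma) \<and>
     smooth (\<lambda>(t, z). fst (u t z)) \<and> smooth (\<lambda>(t, z). snd (u t z))"

definition euler_eq :: "(pt \<Rightarrow> pt) \<Rightarrow> (real \<Rightarrow> real) \<Rightarrow> (real \<Rightarrow> pt \<Rightarrow> pt) \<Rightarrow> bool" where
  "euler_eq \<alpha> a u \<longleftrightarrow>
     (\<forall>t. \<exists>z. ad_transpose_app \<alpha> (a t, u t) z \<and> (deriv a t, dt u t) = ext_neg z)"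

end

theory Submission
  imports Defs
begin

lemma Dir_eq: "(f has_derivative f') (at x) \<Longrightarrow> Dir v f x = f' v"
  unfolding Dir_def using frechet_derivative_at by metis

lemma Dir_works: "f differentiable (at x) \<Longrightarrow> (f has_derivative (\<lambda>v. Dir v f x)) (at x)"
  unfolding Dir_def using frechet_derivative_works by blast

lemma Dir_linear: "f differentiable (at x) \<Longrightarrow> linear (\<lambda>v. Dir v f x)"
  using Dir_works has_derivative_linear by blast

lemma Dir_add_dir: "f differentiable (at x) \<Longrightarrow> Dir (v + w) f x = Dir v f x + Dir w f x"
  using linear_add[OF Dir_linear[of f x]] by simp

lemma Dir_scale_dir: "f differentiable (at x) \<Longrightarrow> Dir (c *\<^sub>R v) f x = c * Dir v f x"
  using linear_scale[OF Dir_linear[of f x]] by simp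

definition smn :: "nat \<Rightarrow> ('a::real_normed_vector \<Rightarrow> real) \<Rightarrow> bool" where
  "smn n f \<longleftrightarrow> (\<forall>vs x. length vs \<le> n \<longrightarrow> pd vs f differentiable (at x))"

lemma pd_snoc: "pd (vs @ [v]) f = pd vs (Dir v f)"
  by (induction vs) auto

lemma smn_0: "smn 0 f \<longleftrightarrow> (\<forall>x. f differentiable (at x))"
  unfolding smn_def by auto

lemma smn_Suc: "smn (Suc n) f \<longleftrightarrow> (\<forall>x. f differentiable (at x)) \<and> (\<forall>v. smn n (Dir v f))"
proof
  assume a: "smn (Suc n) f"
  show "(\<forall>x. f differentiable (at x)) \<and> (\<forall>v. smn n (Dir v f))"
  proof (intro conjI allI)
    fix x show "f differentiable (at x)" using a[unfolded smn_def, rule_format, of "[]"] by simp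
  next
    fix v show "smn n (Dir v f)" unfolding smn_def
    proof (intro allI impI)
      fix vs :: "'a list" and x assume "length vs \<le> n"
      then show "pd vs (Dir v f) differentiable (at x)"
        using a[unfolded smn_def, rule_format, of "vs @ [v]" x] by (simp add: pd_snoc)
    qed
  qed
next
  assume a: "(\<forall>x. f differentiable (at x)) \<and> (\<forall>v. smn n (Dir v f))"
  show "smn (Suc n) f" unfolding smn_def
  proof (intro allI impI)
    fix vs :: "'a list" and x assume l: "length vs \<le> Suc n"
    show "pd vs f differentiable (at x)"
    proof (cases vs rule: rev_exhaust)
      case Nil then show ?thesis using a by simp
    next
      case (snoc ws v)
      then show ?thesis using a l unfolding smn_def by (simp add: pd_snoc)
    qed
  qed
qed

lemma smooth_smn: "smooth f \<longleftrightarrow> (\<forall>n. smn n f)"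
  unfolding smooth_def smn_def by auto

lemma smooth_iff: "smooth f \<longleftrightarrow> (\<forall>x. f differentiable (at x)) \<and> (\<forall>v. smooth (Dir v f))"
proof
  assume "smooth f" then show "(\<forall>x. f differentiable (at x)) \<and> (\<forall>v. smooth (Dir v f))"
    unfolding smooth_smn using smn_Suc by metis
next
  assume a: "(\<forall>x. f differentiable (at x)) \<and> (\<forall>v. smooth (Dir v f))"
  show "smooth f" unfolding smooth_smn
  proof
    fix n show "smn n f" using a by (cases n) (auto simp: smn_0 smn_Suc smooth_smn)
  qed
qed

lemma smooth_diff: "smooth f \<Longrightarrow> f differentiable (at x)"
  using smooth_iff by blast

lemma smooth_Dir: "smooth f \<Longrightarrow> smooth (Dir v f)"
  using smooth_iff by blast

lemma smooth_cont: "smooth f \<Longrightarrow> continuous (at x) f"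
  using smooth_diff differentiable_imp_continuous_within by blast

lemma smooth_cont_on: "smooth f \<Longrightarrow> continuous_on S f"
  using smooth_cont continuous_at_imp_continuous_on by blast

lemma smn_mono: "smn (Suc n) f \<Longrightarrow> smn n f"
  unfolding smn_def by auto

lemma Dir_add: "f differentiable (at x) \<Longrightarrow> g differentiable (at x) \<Longrightarrow>
   Dir v (\<lambda>x. f x + g x) x = Dir v f x + Dir v g x"
  by (rule Dir_eq[OF has_derivative_add[OF Dir_works Dir_works], simplified])

lemma Dir_mult: "f differentiable (at x) \<Longrightarrow> g differentiable (at x) \<Longrightarrow>
   Dir v (\<lambda>x. f x * g x) x = Dir v f x * g x + f x * Dir v g x"
  using Dir_eq[OF has_derivative_mult[OF Dir_works Dir_works], of f x g v] by (simp add: algebra_simps)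

lemma Dir_const: "Dir v (\<lambda>x. c) x = 0"
  by (rule Dir_eq[OF has_derivative_const, simplified])

lemma Dir_cmul: "f differentiable (at x) \<Longrightarrow> Dir v (\<lambda>x. c * f x) x = c * Dir v f x"
  by (rule Dir_eq[OF has_derivative_mult_right[OF Dir_works], simplified])

lemma smn_const: "smn n (\<lambda>x. c)"
proof (induction n arbitrary: c)
  case 0 then show ?case by (simp add: smn_0)
next
  case (Suc n) then show ?case by (simp add: smn_Suc Dir_const[abs_def])
qed

lemma smn_add: "smn n f \<Longrightarrow> smn n g \<Longrightarrow> smn n (\<lambda>x. f x + g x)"
proof (induction n arbitrary: f g)
  case 0 then show ?case by (auto simp: smn_0)
next
  case (Suc n)
  from Suc.prems have df: "\<And>x. f differentiable (at x)" and dg: "\<And>x. g differentiable (at x)"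
    by (auto simp: smn_Suc)
  have "Dir v (\<lambda>x. f x + g x) = (\<lambda>x. Dir v f x + Dir v g x)" for v
    using Dir_add[OF df dg] by auto
  then show ?case using Suc df dg by (auto simp: smn_Suc)
qed

lemma smn_mult: "smn n f \<Longrightarrow> smn n g \<Longrightarrow> smn n (\<lambda>x. f x * g x)"
proof (induction n arbitrary: f g)
  case 0 then show ?case by (auto simp: smn_0)
next
  case (Suc n)
  from Suc.prems have df: "\<And>x. f differentiable (at x)" and dg: "\<And>x. g differentiable (at x)"
    by (auto simp: smn_Suc)
  have e: "Dir v (\<lambda>x. f x * g x) = (\<lambda>x. Dir v f x * g x + f x * Dir v g x)" for v
    using Dir_mult[OF df dg] by auto
  have "smn n (Dir v (\<lambda>x. f x * g x))" for v
    unfolding e using Suc.prems by (intro smn_add Suc.IH) (auto simp: smn_Suc intro: smn_mono)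
  then show ?case using df dg by (auto simp: smn_Suc)
qed

lemma smooth_const[simp]: "smooth (\<lambda>x. c)"
  using smn_const smooth_smn by blast

lemma smooth_add: "smooth f \<Longrightarrow> smooth g \<Longrightarrow> smooth (\<lambda>x. f x + g x)"
  using smn_add smooth_smn by blast

lemma smooth_mult: "smooth f \<Longrightarrow> smooth g \<Longrightarrow> smooth (\<lambda>x. f x * g x)"
  using smn_mult smooth_smn by blast

lemma smooth_cmul: "smooth f \<Longrightarrow> smooth (\<lambda>x. c * f x)"
  using smooth_mult[OF smooth_const] by blast

lemma smooth_uminus: "smooth f \<Longrightarrow> smooth (\<lambda>x. - f x)"
  using smooth_cmul[of f "-1"] by simp

lemma smooth_diff2: "smooth f \<Longrightarrow> smooth g \<Longrightarrow> smooth (\<lambda>x. f x - g x)"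
  using smooth_add[OF _ smooth_uminus] by fastforce

lemma smooth_linear: "bounded_linear l \<Longrightarrow> smooth (\<lambda>x. l x :: real)"
proof -
  assume bl: "bounded_linear l"
  have "Dir v l = (\<lambda>x. l v)" for v using Dir_eq[OF bounded_linear_imp_has_derivative[OF bl]] by auto
  moreover have "l differentiable (at x)" for x using bl bounded_linear_imp_differentiable by blast
  ultimately show ?thesis by (subst smooth_iff) (auto simp: eta_contract_eq)
qed

lemma smn_sin: "bounded_linear l \<Longrightarrow> smn n (\<lambda>x. c * sin (l x + p))"
proof (induction n arbitrary: c p)
  case 0
  have "((\<lambda>x. c * sin (l x + p)) has_derivative (\<lambda>v. c * (cos (l x + p) * l v))) (at x)" for x
    by (auto intro!: derivative_eq_intros bounded_linear_imp_has_derivative 0)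
  then show ?case unfolding smn_0 differentiable_def by blast
next
  case (Suc n)
  have d: "((\<lambda>x. c * sin (l x + p)) has_derivative (\<lambda>v. c * (cos (l x + p) * l v))) (at x)" for x
    by (auto intro!: derivative_eq_intros bounded_linear_imp_has_derivative Suc)
  have e: "Dir v (\<lambda>x. c * sin (l x + p)) = (\<lambda>x. (c * l v) * sin (l x + (p + pi/2)))" for v
  proof -
    have s: "sin (l x + (p + pi/2)) = cos (l x + p)" for x
      using sin_add[of "l x + p" "pi/2"] by (simp add: add.assoc)
    show ?thesis
    proof (rule ext)
      fix x show "Dir v (\<lambda>x. c * sin (l x + p)) x = (c * l v) * sin (l x + (p + pi/2))"
        unfolding Dir_eq[OF d[of x], of v] s by simp
    qed
  qed
  show ?case unfolding smn_Suc
  proof (intro conjI allI)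
    show "(\<lambda>x. c * sin (l x + p)) differentiable (at x)" for x using d differentiable_def by blast
    show "smn n (Dir v (\<lambda>x. c * sin (l x + p)))" for v unfolding e by (rule Suc.IH[OF Suc.prems])
  qed
qed

lemma smooth_sin: "bounded_linear l \<Longrightarrow> smooth (\<lambda>x. c * sin (l x + p))"
  using smn_sin smooth_smn by blast

lemma line_deriv:
  assumes "g differentiable (at (y + s *\<^sub>R v))"
  shows "((\<lambda>s. g (y + s *\<^sub>R v)) has_real_derivative Dir v g (y + s *\<^sub>R v)) (at s within S)"
proof -
  have h1: "((\<lambda>s. y + s *\<^sub>R v) has_derivative (\<lambda>h. h *\<^sub>R v)) (at s within S)"
    by (auto intro!: derivative_eq_intros)
  have h2: "((\<lambda>s. g (y + s *\<^sub>R v)) has_derivative (\<lambda>h. Dir (h *\<^sub>R v) g (y + s *\<^sub>R v))) (at s within S)"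
    using has_derivative_compose[OF h1 Dir_works[OF assms]] .
  have "(\<lambda>h. Dir (h *\<^sub>R v) g (y + s *\<^sub>R v)) = (*) (Dir v g (y + s *\<^sub>R v))"
    using Dir_scale_dir[OF assms] by (auto simp: mult.commute)
  then show ?thesis using h2 unfolding has_field_derivative_def by simp
qed

lemma line_ftc:
  assumes "\<And>z. g differentiable (at z)" and "a \<le> b"
  shows "((\<lambda>s. Dir v g (y + s *\<^sub>R v)) has_integral (g (y + b *\<^sub>R v) - g (y + a *\<^sub>R v))) {a..b}"
proof (rule fundamental_theorem_of_calculus[OF assms(2)])
  fix s assume "s \<in> {a..b}"
  show "((\<lambda>s. g (y + s *\<^sub>R v)) has_vector_derivative Dir v g (y + s *\<^sub>R v)) (at s within {a..b})"
    using line_deriv[OF assms(1)] unfolding has_real_derivative_iff_has_vector_derivative .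
qed

lemma line_ftc_int:
  assumes "\<And>z. g differentiable (at z)" and "a \<le> b"
  shows "integral {a..b} (\<lambda>s. Dir v g (y + s *\<^sub>R v)) = g (y + b *\<^sub>R v) - g (y + a *\<^sub>R v)"
  using line_ftc[OF assms] by blast

lemma cont_affine2:
  fixes h :: "'a::real_normed_vector \<Rightarrow> real"
  assumes "\<And>z. continuous (at z) h"
  shows "continuous_on S (\<lambda>p::real\<times>real. h (x + fst p *\<^sub>R v + snd p *\<^sub>R w))"
proof -
  have "continuous_on S (\<lambda>p::real\<times>real. x + fst p *\<^sub>R v + snd p *\<^sub>R w)"
    by (intro continuous_on_add continuous_on_const continuous_on_scaleR continuous_on_fst continuous_on_snd continuous_on_id)
  moreover have "continuous_on UNIV h" using assms continuous_at_imp_continuous_on by blast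
  ultimately show ?thesis using continuous_on_compose2[of UNIV h] by blast
qed

lemma box_pair_iff: "((s::real),(t::real)) \<in> box (a,c) (b,d) \<longleftrightarrow> a < s \<and> s < b \<and> c < t \<and> t < d"
  by (auto simp: mem_box Basis_prod_def)

lemma schwarz:
  fixes f :: "'a::real_normed_vector \<Rightarrow> real"
  assumes sf: "smooth f"
  shows "Dir v (Dir w f) x = Dir w (Dir v f) x"
proof -
  define \<gamma> where "\<gamma> p = x + fst p *\<^sub>R v + snd p *\<^sub>R w" for p :: "real \<times> real"
  define A where "A p = Dir v (Dir w f) (\<gamma> p)" for p
  define B where "B p = Dir w (Dir v f) (\<gamma> p)" for p
  have sA: "smooth (Dir v (Dir w f))" and sB: "smooth (Dir w (Dir v f))"
    and sW: "smooth (Dir w f)" and sV: "smooth (Dir v f)"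
    using sf smooth_Dir by blast+
  have cA: "continuous_on S A" for S
    unfolding A_def \<gamma>_def by (rule cont_affine2) (rule smooth_cont[OF sA])
  have cB: "continuous_on S B" for S
    unfolding B_def \<gamma>_def by (rule cont_affine2) (rule smooth_cont[OF sB])
  have dF: "\<And>z. f differentiable (at z)" using smooth_diff[OF sf] .
  have dW: "\<And>z. Dir w f differentiable (at z)" using smooth_diff[OF sW] .
  have dV: "\<And>z. Dir v f differentiable (at z)" using smooth_diff[OF sV] .
  have intA: "integral (cbox (0,0) (S,T)) A = f (x + S *\<^sub>R v + T *\<^sub>R w) - f (x + S *\<^sub>R v) - f (x + T *\<^sub>R w) + f x"
    if "0 \<le> S" "0 \<le> T" for S T
  proof -
    have "integral (cbox (0,0) (S,T)) A = integral (cbox 0 S) (\<lambda>s. integral (cbox 0 T) (\<lambda>t. A (s,t)))"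
      using integral_prod_continuous[OF cA] by blast
    also have "\<dots> = integral (cbox 0 T) (\<lambda>t. integral (cbox 0 S) (\<lambda>s. A (s,t)))"
      by (rule integral_swap_continuous) (use cA in \<open>simp add: case_prod_beta'\<close>)
    also have "\<dots> = integral {0..T} (\<lambda>t. Dir w f ((x + S *\<^sub>R v) + t *\<^sub>R w) - Dir w f (x + t *\<^sub>R w))"
    proof -
      have "integral (cbox 0 S) (\<lambda>s. A (s,t)) = Dir w f ((x + S *\<^sub>R v) + t *\<^sub>R w) - Dir w f (x + t *\<^sub>R w)" for t
      proof -
        have "integral {0..S} (\<lambda>s. Dir v (Dir w f) ((x + t *\<^sub>R w) + s *\<^sub>R v)) =
             Dir w f ((x + t *\<^sub>R w) + S *\<^sub>R v) - Dir w f ((x + t *\<^sub>R w) + 0 *\<^sub>R v)"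
          by (rule line_ftc_int[OF dW that(1)])
        moreover have "(\<lambda>s. A (s,t)) = (\<lambda>s. Dir v (Dir w f) ((x + t *\<^sub>R w) + s *\<^sub>R v))"
          unfolding A_def \<gamma>_def by (auto simp: algebra_simps)
        ultimately show ?thesis by (simp add: algebra_simps)
      qed
      then show ?thesis by simp
    qed
    also have "\<dots> = (f ((x + S *\<^sub>R v) + T *\<^sub>R w) - f (x + S *\<^sub>R v)) - (f (x + T *\<^sub>R w) - f x)"
    proof -
      have i1: "((\<lambda>t. Dir w f ((x + S *\<^sub>R v) + t *\<^sub>R w)) has_integral (f ((x + S *\<^sub>R v) + T *\<^sub>R w) - f ((x + S *\<^sub>R v) + 0 *\<^sub>R w))) {0..T}"
        by (rule line_ftc[OF dF that(2)])
      have i2: "((\<lambda>t. Dir w f (x + t *\<^sub>R w)) has_integral (f (x + T *\<^sub>R w) - f (x + 0 *\<^sub>R w))) {0..T}"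
        by (rule line_ftc[OF dF that(2)])
      show ?thesis using has_integral_diff[OF i1 i2] by (simp add: integral_unique)
    qed
    finally show ?thesis by (simp add: algebra_simps)
  qed
  have intB: "integral (cbox (0,0) (S,T)) B = f (x + S *\<^sub>R v + T *\<^sub>R w) - f (x + S *\<^sub>R v) - f (x + T *\<^sub>R w) + f x"
    if "0 \<le> S" "0 \<le> T" for S T
  proof -
    have "integral (cbox (0,0) (S,T)) B = integral (cbox 0 S) (\<lambda>s. integral (cbox 0 T) (\<lambda>t. B (s,t)))"
      using integral_prod_continuous[OF cB] by blast
    also have "\<dots> = integral {0..S} (\<lambda>s. Dir v f ((x + T *\<^sub>R w) + s *\<^sub>R v) - Dir v f (x + s *\<^sub>R v))"
    proof -
      have "integral (cbox 0 T) (\<lambda>t. B (s,t)) = Dir v f ((x + T *\<^sub>R w) + s *\<^sub>R v) - Dir v f (x + s *\<^sub>R v)" for s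
      proof -
        have "integral {0..T} (\<lambda>t. Dir w (Dir v f) ((x + s *\<^sub>R v) + t *\<^sub>R w)) =
             Dir v f ((x + s *\<^sub>R v) + T *\<^sub>R w) - Dir v f ((x + s *\<^sub>R v) + 0 *\<^sub>R w)"
          by (rule line_ftc_int[OF dV that(2)])
        moreover have "(\<lambda>t. B (s,t)) = (\<lambda>t. Dir w (Dir v f) ((x + s *\<^sub>R v) + t *\<^sub>R w))"
          unfolding B_def \<gamma>_def by (auto simp: algebra_simps)
        ultimately show ?thesis by (simp add: algebra_simps)
      qed
      then show ?thesis by simp
    qed
    also have "\<dots> = (f ((x + T *\<^sub>R w) + S *\<^sub>R v) - f (x + T *\<^sub>R w)) - (f (x + S *\<^sub>R v) - f x)"
    proof -
      have i1: "((\<lambda>s. Dir v f ((x + T *\<^sub>R w) + s *\<^sub>R v)) has_integral (f ((x + T *\<^sub>R w) + S *\<^sub>R v) - f ((x + T *\<^sub>R w) + 0 *\<^sub>R v))) {0..S}"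
        by (rule line_ftc[OF dF that(1)])
      have i2: "((\<lambda>s. Dir v f (x + s *\<^sub>R v)) has_integral (f (x + S *\<^sub>R v) - f (x + 0 *\<^sub>R v))) {0..S}"
        by (rule line_ftc[OF dF that(1)])
      show ?thesis using has_integral_diff[OF i1 i2] by (simp add: integral_unique)
    qed
    finally show ?thesis by (simp add: algebra_simps)
  qed
  define D where "D p = A p - B p" for p
  have cD: "continuous_on S D" for S unfolding D_def using cA cB by (intro continuous_intros)
  have intD: "(D has_integral 0) (cbox (0,0) (S,T))" if "0 \<le> S" "0 \<le> T" for S T
  proof -
    have "(A has_integral integral (cbox (0,0) (S,T)) A) (cbox (0,0) (S,T))"
      using integrable_continuous[OF cA] by (simp add: integrable_integral)
    moreover have "(B has_integral integral (cbox (0,0) (S,T)) B) (cbox (0,0) (S,T))"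
      using integrable_continuous[OF cB] by (simp add: integrable_integral)
    ultimately have "((\<lambda>p. A p - B p) has_integral (integral (cbox (0,0) (S,T)) A - integral (cbox (0,0) (S,T)) B)) (cbox (0,0) (S,T))"
      by (rule has_integral_diff)
    moreover have "D = (\<lambda>p. A p - B p)" by (rule ext) (simp add: D_def)
    ultimately show ?thesis using intA[OF that] intB[OF that] by simp
  qed
  have "D (0,0) = 0"
  proof (rule ccontr)
    assume nz: "D (0,0) \<noteq> 0"
    define E where "E p = D p * D (0,0)" for p
    have cE: "continuous_on S E" for S unfolding E_def using cD by (intro continuous_intros)
    have E0: "E (0,0) > 0" unfolding E_def using nz not_real_square_gt_zero by blast
    have "isCont E (0,0)" using cE[of UNIV] continuous_on_eq_continuous_at by blast
    then obtain d where d: "d > 0" "\<And>p. dist p (0,0) < d \<Longrightarrow> dist (E p) (E (0,0)) < E (0,0)"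
      using E0 unfolding continuous_at_eps_delta by blast
    define S where "S = d / 3"
    have S: "S > 0" using d unfolding S_def by simp
    have pos: "0 \<le> E p" if "p \<in> box (0,0) (S,S)" for p
    proof -
      obtain s t where p: "p = (s,t)" by (cases p)
      have "0 < s" "s < S" "0 < t" "t < S" using that p by (auto simp: box_pair_iff)
      then have "norm (s,t) \<le> norm s + norm t" using norm_Pair_le by blast
      also have "\<dots> < d" using \<open>0 < s\<close> \<open>s < S\<close> \<open>0 < t\<close> \<open>t < S\<close> unfolding S_def by simp
      finally have "dist p (0,0) < d" using p by (simp add: dist_norm)
      then have "\<bar>E p - E (0,0)\<bar> < E (0,0)" using d(2)[of p] by (simp add: dist_real_def)
      then show ?thesis by linarith
    qed
    have hE: "(E has_integral 0) (cbox (0,0) (S,S))"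
      using has_integral_mult_left[OF intD[of S S]] S unfolding E_def by simp
    have "(S/2, S/2) \<in> box (0, 0) (S, S)" using S by (simp add: box_pair_iff)
    then have ne: "box (0, 0) (S, S) \<noteq> {}" by blast
    have mem: "(0::real,0::real) \<in> cbox (0,0) (S,S)" using S by (auto simp: cbox_Pair_iff)
    have "E (0,0) = 0"
      using has_integral_0_cbox_imp_0[OF cE pos hE ne mem] .
    then show False using E0 by simp
  qed
  then show ?thesis unfolding D_def A_def B_def \<gamma>_def by simp
qed

lemma Dir_pt: "f differentiable (at z) \<Longrightarrow> Dir v f z = fst v * Dx f z + snd v * Dy f z"
proof -
  assume d: "f differentiable (at z)"
  have "v = fst v *\<^sub>R (1,0) + snd v *\<^sub>R (0,1)" by (cases v) simp
  then have "Dir v f z = Dir (fst v *\<^sub>R (1,0) + snd v *\<^sub>R (0,1)) f z" by simp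
  also have "\<dots> = fst v * Dx f z + snd v * Dy f z"
    by (simp only: Dir_add_dir[OF d] Dir_scale_dir[OF d] Dx_def Dy_def)
  finally show ?thesis .
qed

lemma tfun_smooth: "tfun f \<Longrightarrow> smooth f" unfolding tfun_def by blast
lemma tfun_periodic: "tfun f \<Longrightarrow> periodic f" unfolding tfun_def by blast

lemma periodic_add: "periodic f \<Longrightarrow> periodic g \<Longrightarrow> periodic (\<lambda>z. f z + g z)"
  unfolding periodic_def by simp
lemma periodic_mult: "periodic f \<Longrightarrow> periodic g \<Longrightarrow> periodic (\<lambda>z. f z * g z)"
  unfolding periodic_def by simp
lemma periodic_const: "periodic (\<lambda>z. c)" unfolding periodic_def by simp

lemma tfun_const[simp]: "tfun (\<lambda>z. c)" unfolding tfun_def by (simp add: periodic_const)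
lemma tfun_add: "tfun f \<Longrightarrow> tfun g \<Longrightarrow> tfun (\<lambda>z. f z + g z)"
  unfolding tfun_def by (simp add: periodic_add smooth_add)
lemma tfun_mult: "tfun f \<Longrightarrow> tfun g \<Longrightarrow> tfun (\<lambda>z. f z * g z)"
  unfolding tfun_def by (simp add: periodic_mult smooth_mult)
lemma tfun_cmul: "tfun f \<Longrightarrow> tfun (\<lambda>z. c * f z)"
  using tfun_mult[OF tfun_const] by blast
lemma tfun_uminus: "tfun f \<Longrightarrow> tfun (\<lambda>z. - f z)"
  using tfun_cmul[of f "-1"] by simp
lemma tfun_diff: "tfun f \<Longrightarrow> tfun g \<Longrightarrow> tfun (\<lambda>z. f z - g z)"
  using tfun_add[OF _ tfun_uminus] by fastforce

lemma Dir_shift: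
  assumes "f differentiable (at (z + e))"
  shows "Dir v (\<lambda>w. f (w + e)) z = Dir v f (z + e)"
proof -
  have h1: "((\<lambda>w. w + e) has_derivative (\<lambda>h. h)) (at z)" by (auto intro!: derivative_eq_intros)
  show ?thesis using Dir_eq[OF has_derivative_compose[OF h1 Dir_works[OF assms]]] by simp
qed

lemma Dir_periodic_shift:
  assumes "smooth f" "\<And>w. f (w + e) = f w"
  shows "Dir v f (z + e) = Dir v f z"
proof -
  have "(\<lambda>w. f (w + e)) = f" using assms(2) by auto
  then show ?thesis using Dir_shift[where f=f and z=z and e=e and v=v, OF smooth_diff[OF assms(1)]] by simp
qed

lemma periodic_shift:
  "periodic f \<longleftrightarrow> (\<forall>w. f (w + (1,0)) = f w) \<and> (\<forall>w. f (w + (0,1)) = f w)"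
  unfolding periodic_def by auto

lemma periodic_Dir: "smooth f \<Longrightarrow> periodic f \<Longrightarrow> periodic (Dir v f)"
  unfolding periodic_shift using Dir_periodic_shift by metis

lemma tfun_Dir: "tfun f \<Longrightarrow> tfun (Dir v f)"
  unfolding tfun_def using smooth_Dir periodic_Dir by blast
lemma tfun_Dx: "tfun f \<Longrightarrow> tfun (Dx f)" unfolding Dx_def by (rule tfun_Dir)
lemma tfun_Dy: "tfun f \<Longrightarrow> tfun (Dy f)" unfolding Dy_def by (rule tfun_Dir)

lemma smooth_Dx: "smooth f \<Longrightarrow> smooth (Dx f)" unfolding Dx_def by (rule smooth_Dir)
lemma smooth_Dy: "smooth f \<Longrightarrow> smooth (Dy f)" unfolding Dy_def by (rule smooth_Dir)

lemma schwarz_xy: "smooth f \<Longrightarrow> Dx (Dy f) z = Dy (Dx f) z"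
  unfolding Dx_def Dy_def by (rule schwarz)

lemma Dx_add: "smooth f \<Longrightarrow> smooth g \<Longrightarrow> Dx (\<lambda>z. f z + g z) z = Dx f z + Dx g z"
  unfolding Dx_def by (intro Dir_add smooth_diff)
lemma Dy_add: "smooth f \<Longrightarrow> smooth g \<Longrightarrow> Dy (\<lambda>z. f z + g z) z = Dy f z + Dy g z"
  unfolding Dy_def by (intro Dir_add smooth_diff)
lemma Dx_mult: "smooth f \<Longrightarrow> smooth g \<Longrightarrow> Dx (\<lambda>z. f z * g z) z = Dx f z * g z + f z * Dx g z"
  unfolding Dx_def by (intro Dir_mult smooth_diff)
lemma Dy_mult: "smooth f \<Longrightarrow> smooth g \<Longrightarrow> Dy (\<lambda>z. f z * g z) z = Dy f z * g z + f z * Dy g z"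
  unfolding Dy_def by (intro Dir_mult smooth_diff)
lemma Dx_const: "Dx (\<lambda>z. c) z = 0" unfolding Dx_def by (rule Dir_const)
lemma Dy_const: "Dy (\<lambda>z. c) z = 0" unfolding Dy_def by (rule Dir_const)
lemma Dx_cmul: "smooth f \<Longrightarrow> Dx (\<lambda>z. c * f z) z = c * Dx f z"
  unfolding Dx_def by (intro Dir_cmul smooth_diff)
lemma Dy_cmul: "smooth f \<Longrightarrow> Dy (\<lambda>z. c * f z) z = c * Dy f z"
  unfolding Dy_def by (intro Dir_cmul smooth_diff)
lemma Dx_uminus: "smooth f \<Longrightarrow> Dx (\<lambda>z. - f z) z = - Dx f z"
  using Dx_cmul[of f "-1"] by simp
lemma Dy_uminus: "smooth f \<Longrightarrow> Dy (\<lambda>z. - f z) z = - Dy f z"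
  using Dy_cmul[of f "-1"] by simp
lemma Dx_diff: "smooth f \<Longrightarrow> smooth g \<Longrightarrow> Dx (\<lambda>z. f z - g z) z = Dx f z - Dx g z"
  using Dx_add[OF _ smooth_uminus, of f g] Dx_uminus[of g] by simp
lemma Dy_diff: "smooth f \<Longrightarrow> smooth g \<Longrightarrow> Dy (\<lambda>z. f z - g z) z = Dy f z - Dy g z"
  using Dy_add[OF _ smooth_uminus, of f g] Dy_uminus[of g] by simp

section \<open>Integration\<close>

lemma cont_tint: "smooth f \<Longrightarrow> continuous_on (cbox (0,0) (1,1)) f"
  by (rule smooth_cont_on)

lemma tint_integrable: "smooth f \<Longrightarrow> f integrable_on cbox (0,0) (1,1)"
  using integrable_continuous[OF cont_tint] by blast

lemma tint_add: "smooth f \<Longrightarrow> smooth g \<Longrightarrow> tint (\<lambda>z. f z + g z) = tint f + tint g"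
  unfolding tint_def by (intro integral_add tint_integrable)
lemma tint_diff: "smooth f \<Longrightarrow> smooth g \<Longrightarrow> tint (\<lambda>z. f z - g z) = tint f - tint g"
  unfolding tint_def by (intro integral_diff tint_integrable)
lemma tint_cmul: "tint (\<lambda>z. c * f z) = c * tint f"
  unfolding tint_def by simp
lemma tint_uminus: "tint (\<lambda>z. - f z) = - tint f"
  unfolding tint_def by simp
lemma tint_const: "tint (\<lambda>z. c) = c"
  unfolding tint_def by (simp add: content_Pair)

lemma tint_Dx_zero:
  assumes "tfun F" shows "tint (Dx F) = 0"
proof -
  have sF: "smooth F" using assms tfun_smooth by blast
  have c: "continuous_on (cbox (0,0) (1,1)) (Dx F)" using smooth_Dx[OF sF] by (rule cont_tint)
  have "tint (Dx F) = integral (cbox 0 1) (\<lambda>x. integral (cbox 0 1) (\<lambda>y. Dx F (x,y)))"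
    unfolding tint_def using integral_prod_continuous[OF c] by blast
  also have "\<dots> = integral (cbox 0 1) (\<lambda>y. integral (cbox 0 1) (\<lambda>x. Dx F (x,y)))"
    by (rule integral_swap_continuous) (use c in \<open>simp add: case_prod_beta'\<close>)
  also have "\<dots> = integral (cbox 0 1) (\<lambda>y. 0::real)"
  proof -
    have "integral (cbox 0 1) (\<lambda>x. Dx F (x,y)) = 0" for y
    proof -
      have "integral {0..1} (\<lambda>s. Dir (1,0) F ((0,y) + s *\<^sub>R (1,0))) = F ((0,y) + 1 *\<^sub>R (1,0)) - F ((0,y) + 0 *\<^sub>R (1,0))"
        by (rule line_ftc_int[OF smooth_diff[OF sF]]) simp
      moreover have "F (1, y) = F (0, y)" using tfun_periodic[OF assms] unfolding periodic_def
        by (metis add_0)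
      ultimately show ?thesis unfolding Dx_def by simp
    qed
    then show ?thesis by simp
  qed
  finally show ?thesis by simp
qed

lemma tint_Dy_zero:
  assumes "tfun F" shows "tint (Dy F) = 0"
proof -
  have sF: "smooth F" using assms tfun_smooth by blast
  have c: "continuous_on (cbox (0,0) (1,1)) (Dy F)" using smooth_Dy[OF sF] by (rule cont_tint)
  have "tint (Dy F) = integral (cbox 0 1) (\<lambda>x. integral (cbox 0 1) (\<lambda>y. Dy F (x,y)))"
    unfolding tint_def using integral_prod_continuous[OF c] by blast
  also have "\<dots> = integral (cbox 0 1) (\<lambda>x. 0::real)"
  proof -
    have "integral (cbox 0 1) (\<lambda>y. Dy F (x,y)) = 0" for x
    proof -
      have "integral {0..1} (\<lambda>s. Dir (0,1) F ((x,0) + s *\<^sub>R (0,1))) = F ((x,0) + 1 *\<^sub>R (0,1)) - F ((x,0) + 0 *\<^sub>R (0,1))"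
        by (rule line_ftc_int[OF smooth_diff[OF sF]]) simp
      moreover have "F (x, 1) = F (x, 0)" using tfun_periodic[OF assms] unfolding periodic_def
        by (metis add_0)
      ultimately show ?thesis unfolding Dy_def by simp
    qed
    then show ?thesis by simp
  qed
  finally show ?thesis by simp
qed

lemma tint_parts_x:
  assumes "tfun f" "tfun g"
  shows "tint (\<lambda>z. Dx f z * g z) = - tint (\<lambda>z. f z * Dx g z)"
proof -
  have sf: "smooth f" and sg: "smooth g" using assms tfun_smooth by blast+
  have "0 = tint (Dx (\<lambda>z. f z * g z))" using tint_Dx_zero[OF tfun_mult[OF assms]] by simp
  also have "Dx (\<lambda>z. f z * g z) = (\<lambda>z. Dx f z * g z + f z * Dx g z)"
    using Dx_mult[OF sf sg] by auto
  also have "tint \<dots> = tint (\<lambda>z. Dx f z * g z) + tint (\<lambda>z. f z * Dx g z)"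
    by (intro tint_add smooth_mult smooth_Dx sf sg)
  finally show ?thesis by linarith
qed

lemma tint_parts_y:
  assumes "tfun f" "tfun g"
  shows "tint (\<lambda>z. Dy f z * g z) = - tint (\<lambda>z. f z * Dy g z)"
proof -
  have sf: "smooth f" and sg: "smooth g" using assms tfun_smooth by blast+
  have "0 = tint (Dy (\<lambda>z. f z * g z))" using tint_Dy_zero[OF tfun_mult[OF assms]] by simp
  also have "Dy (\<lambda>z. f z * g z) = (\<lambda>z. Dy f z * g z + f z * Dy g z)"
    using Dy_mult[OF sf sg] by auto
  also have "tint \<dots> = tint (\<lambda>z. Dy f z * g z) + tint (\<lambda>z. f z * Dy g z)"
    by (intro tint_add smooth_mult smooth_Dy sf sg)
  finally show ?thesis by linarith
qed

lemma cont_scale: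
  assumes "smooth h"
  shows "continuous_on S (\<lambda>q::(pt \<times> real). h (snd q *\<^sub>R fst q))"
proof -
  have "continuous_on S (\<lambda>q::(pt \<times> real). snd q *\<^sub>R fst q)"
    by (intro continuous_on_scaleR continuous_on_fst continuous_on_snd continuous_on_id)
  moreover have "continuous_on UNIV h" using smooth_cont_on[OF assms] .
  ultimately show ?thesis using continuous_on_compose2[of UNIV h] by blast
qed

lemma has_derivative_scale_comp:
  assumes "smooth h"
  shows "((\<lambda>z. h (s *\<^sub>R z)) has_derivative (\<lambda>v. s * (fst v * Dx h (s *\<^sub>R z) + snd v * Dy h (s *\<^sub>R z)))) (at z within U)"
proof -
  have d: "h differentiable (at (s *\<^sub>R z))" using smooth_diff[OF assms] .
  have h1: "((\<lambda>z. s *\<^sub>R z) has_derivative (\<lambda>v. s *\<^sub>R v)) (at z within U)"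
    by (auto intro!: derivative_eq_intros)
  have "((\<lambda>z. h (s *\<^sub>R z)) has_derivative (\<lambda>v. Dir (s *\<^sub>R v) h (s *\<^sub>R z))) (at z within U)"
    using has_derivative_compose[OF h1 Dir_works[OF d]] .
  moreover have "(\<lambda>v. Dir (s *\<^sub>R v) h (s *\<^sub>R z)) = (\<lambda>v. s * (fst v * Dx h (s *\<^sub>R z) + snd v * Dy h (s *\<^sub>R z)))"
    using Dir_scale_dir[OF d] Dir_pt[OF d] by auto
  ultimately show ?thesis by simp
qed

lemma radial_integral:
  assumes sV: "smooth V" and G: "\<And>w. fst z * Dx V w + snd z * Dy V w = G w"
  shows "integral {0..1} (\<lambda>s. s * G (s *\<^sub>R z) + V (s *\<^sub>R z)) = V z"
proof -
  have d: "\<And>w. V differentiable (at w)" using smooth_diff[OF sV] .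
  have "((\<lambda>s. s * V (s *\<^sub>R z)) has_vector_derivative
      (s * G (s *\<^sub>R z) + V (s *\<^sub>R z))) (at s within {0..1})" for s
  proof -
    have h: "((\<lambda>s. s * V (0 + s *\<^sub>R z)) has_real_derivative
         (1 * V (0 + s *\<^sub>R z) + Dir z V (0 + s *\<^sub>R z) * s)) (at s within {0..1})"
      by (rule DERIV_mult[OF DERIV_ident line_deriv[OF d]])
    have e: "1 * V (0 + s *\<^sub>R z) + Dir z V (0 + s *\<^sub>R z) * s = s * G (s *\<^sub>R z) + V (s *\<^sub>R z)"
      using Dir_pt[OF d, of z "s *\<^sub>R z"] G[of "s *\<^sub>R z"] by (simp add: algebra_simps)
    show ?thesis using h unfolding e has_real_derivative_iff_has_vector_derivative by simp
  qed
  from fundamental_theorem_of_calculus[of 0 1, OF _ this]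
  show ?thesis by (simp add: integral_unique)
qed

lemma tint_x_lines:
  assumes "smooth W" "\<And>y. integral {0..1} (\<lambda>x. W (x,y)) = c"
  shows "tint W = c"
proof -
  have c: "continuous_on (cbox (0,0) (1,1)) W" using assms(1) by (rule cont_tint)
  have "tint W = integral (cbox 0 1) (\<lambda>x. integral (cbox 0 1) (\<lambda>y. W (x,y)))"
    unfolding tint_def using integral_prod_continuous[OF c] by blast
  also have "\<dots> = integral (cbox 0 1) (\<lambda>y. integral (cbox 0 1) (\<lambda>x. W (x,y)))"
    by (rule integral_swap_continuous) (use c in \<open>simp add: case_prod_beta'\<close>)
  also have "\<dots> = c" using assms(2) by simp
  finally show ?thesis .
qed

lemma tint_y_lines:
  assumes "smooth W" "\<And>x. integral {0..1} (\<lambda>y. W (x,y)) = c"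
  shows "tint W = c"
proof -
  have c: "continuous_on (cbox (0,0) (1,1)) W" using assms(1) by (rule cont_tint)
  have "tint W = integral (cbox 0 1) (\<lambda>x. integral (cbox 0 1) (\<lambda>y. W (x,y)))"
    unfolding tint_def using integral_prod_continuous[OF c] by blast
  also have "\<dots> = c" using assms(2) by simp
  finally show ?thesis .
qed

lemma shift_const:
  assumes d: "\<And>z. (p has_derivative (\<lambda>v. W1 z * fst v + W2 z * snd v)) (at z)"
    and pe: "\<And>z. W1 (z + e) = W1 z" "\<And>z. W2 (z + e) = W2 z"
  shows "\<exists>c. \<forall>z. p (z + e) - p z = c"
proof -
  have "((\<lambda>z. p (z + e) - p z) has_derivative (\<lambda>v. 0)) (at z within UNIV)" for z
  proof -
    have h1: "((\<lambda>w. w + e) has_derivative (\<lambda>h. h)) (at z)" by (auto intro!: derivative_eq_intros)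
    have "((\<lambda>z. p (z + e) - p z) has_derivative
       (\<lambda>v. (W1 (z + e) * fst v + W2 (z + e) * snd v) - (W1 z * fst v + W2 z * snd v))) (at z)"
      by (rule has_derivative_diff[OF has_derivative_compose[OF h1 d] d])
    then show ?thesis using pe by simp
  qed
  from has_derivative_zero_constant[of UNIV, OF _ this] show ?thesis by auto
qed

lemma poincare:
  assumes t1: "tfun W1" and t2: "tfun W2" and m1: "tint W1 = 0" and m2: "tint W2 = 0"
    and curl: "\<And>z. Dy W1 z = Dx W2 z"
  shows "\<exists>p. tfun p \<and> (\<forall>z. Dx p z = W1 z \<and> Dy p z = W2 z)"
proof -
  have s1: "smooth W1" and s2: "smooth W2" using t1 t2 tfun_smooth by blast+
  define f where "f z s = W1 (s *\<^sub>R z) * fst z + W2 (s *\<^sub>R z) * snd z" for z :: pt and s :: real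
  define a where "a z s = s * (Dx W1 (s *\<^sub>R z) * fst z + Dx W2 (s *\<^sub>R z) * snd z) + W1 (s *\<^sub>R z)" for z :: pt and s :: real
  define b where "b z s = s * (Dy W1 (s *\<^sub>R z) * fst z + Dy W2 (s *\<^sub>R z) * snd z) + W2 (s *\<^sub>R z)" for z :: pt and s :: real
  define fx where "fx z s = Blinfun (\<lambda>v::pt. a z s * fst v + b z s * snd v)" for z s
  have bl: "bounded_linear (\<lambda>v::pt. c * fst v + d * snd v)" for c d :: real
    by (intro bounded_linear_intros)
  have fx_app: "blinfun_apply (fx z s) = (\<lambda>v. a z s * fst v + b z s * snd v)" for z s
    unfolding fx_def using bounded_linear_Blinfun_apply[OF bl] .
  define p where "p z = integral (cbox 0 1) (f z)" for z
  have ca: "continuous_on S (\<lambda>(z,s). a z s)" for S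
    unfolding a_def case_prod_beta'
    using cont_scale[OF smooth_Dx[OF s1]] cont_scale[OF smooth_Dx[OF s2]] cont_scale[OF s1]
    by (intro continuous_intros) auto
  have cb: "continuous_on S (\<lambda>(z,s). b z s)" for S
    unfolding b_def case_prod_beta'
    using cont_scale[OF smooth_Dy[OF s1]] cont_scale[OF smooth_Dy[OF s2]] cont_scale[OF s2]
    by (intro continuous_intros) auto
  have cfx: "continuous_on (UNIV \<times> cbox 0 1) (\<lambda>(z, s). fx z s)"
    by (rule continuous_on_blinfun_componentwise)
      (use ca cb in \<open>auto simp: fx_app case_prod_beta' intro!: continuous_intros\<close>)
  have deriv: "(p has_derivative (\<lambda>v. W1 z * fst v + W2 z * snd v)) (at z)" for z
  proof -
    have L: "((\<lambda>z. integral (cbox 0 1) (f z)) has_derivative blinfun_apply (integral (cbox 0 1) (fx z))) (at z within UNIV)"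
    proof (rule leibniz_rule)
      fix z :: pt and s :: real
      have "((\<lambda>z. W1 (s *\<^sub>R z) * fst z + W2 (s *\<^sub>R z) * snd z) has_derivative
        (\<lambda>v. W1 (s *\<^sub>R z) * fst v + s * (fst v * Dx W1 (s *\<^sub>R z) + snd v * Dy W1 (s *\<^sub>R z)) * fst z +
              (W2 (s *\<^sub>R z) * snd v + s * (fst v * Dx W2 (s *\<^sub>R z) + snd v * Dy W2 (s *\<^sub>R z)) * snd z))) (at z within UNIV)"
        by (intro has_derivative_add has_derivative_mult has_derivative_scale_comp s1 s2
             has_derivative_fst has_derivative_snd has_derivative_ident)
      moreover have "(\<lambda>v. W1 (s *\<^sub>R z) * fst v + s * (fst v * Dx W1 (s *\<^sub>R z) + snd v * Dy W1 (s *\<^sub>R z)) * fst z +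
              (W2 (s *\<^sub>R z) * snd v + s * (fst v * Dx W2 (s *\<^sub>R z) + snd v * Dy W2 (s *\<^sub>R z)) * snd z)) = blinfun_apply (fx z s)"
        unfolding fx_app a_def b_def by (auto simp: algebra_simps)
      ultimately show "((\<lambda>z. f z s) has_derivative blinfun_apply (fx z s)) (at z within UNIV)"
        unfolding f_def by simp
    next
      fix z :: pt
      show "f z integrable_on cbox 0 1" unfolding f_def cbox_interval
        by (rule integrable_continuous_real)
           (intro continuous_intros continuous_on_compose2[OF smooth_cont_on[OF s1]]
              continuous_on_compose2[OF smooth_cont_on[OF s2]]; auto)
    next
      show "continuous_on (UNIV \<times> cbox 0 1) (\<lambda>(z, s). fx z s)" by (rule cfx)
    qed auto
    have ia: "(\<lambda>s. a z s) integrable_on cbox 0 1" and ib: "(\<lambda>s. b z s) integrable_on cbox 0 1"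
    proof -
      have "continuous_on {0..1} (\<lambda>s. (\<lambda>(z,s). a z s) (z, s))"
        by (rule continuous_on_compose2[OF ca[of UNIV]]) (auto intro!: continuous_intros)
      moreover have "continuous_on {0..1} (\<lambda>s. (\<lambda>(z,s). b z s) (z, s))"
        by (rule continuous_on_compose2[OF cb[of UNIV]]) (auto intro!: continuous_intros)
      ultimately show "(\<lambda>s. a z s) integrable_on cbox 0 1" "(\<lambda>s. b z s) integrable_on cbox 0 1"
        unfolding cbox_interval by (auto intro!: integrable_continuous_real)
    qed
    have ifx: "fx z integrable_on cbox 0 1"
    proof -
      have "continuous_on (cbox 0 1) (\<lambda>s. (\<lambda>(z,s). fx z s) (z, s))"
        by (rule continuous_on_compose2[OF cfx]) (auto intro!: continuous_intros)
      then have "continuous_on (cbox 0 1) (fx z)" by simp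
      then show ?thesis by (rule integrable_continuous)
    qed
    have "blinfun_apply (integral (cbox 0 1) (fx z)) = (\<lambda>v. W1 z * fst v + W2 z * snd v)"
    proof
      fix v :: pt
      have "blinfun_apply (integral (cbox 0 1) (fx z)) v = integral (cbox 0 1) (\<lambda>s. a z s * fst v + b z s * snd v)"
        using blinfun_apply_integral[OF ifx] by (simp add: fx_app)
      also have "\<dots> = integral (cbox 0 1) (\<lambda>s. a z s) * fst v + integral (cbox 0 1) (\<lambda>s. b z s) * snd v"
        using ia ib by (simp add: integral_add integrable_on_mult_left integral_mult_left)
      also have "integral (cbox 0 1) (\<lambda>s. a z s) = W1 z"
        unfolding a_def cbox_interval by (rule radial_integral[OF s1]) (simp add: curl algebra_simps)
      also have "integral (cbox 0 1) (\<lambda>s. b z s) = W2 z"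
        unfolding b_def cbox_interval by (rule radial_integral[OF s2]) (simp add: curl algebra_simps)
      finally show "blinfun_apply (integral (cbox 0 1) (fx z)) v = W1 z * fst v + W2 z * snd v" .
    qed
    then show ?thesis using L unfolding p_def by simp
  qed
  have Dirp: "Dir v p z = W1 z * fst v + W2 z * snd v" for v z using Dir_eq[OF deriv] .
  have Dxp: "Dx p z = W1 z" for z unfolding Dx_def Dirp by simp
  have Dyp: "Dy p z = W2 z" for z unfolding Dy_def Dirp by simp
  have sp: "smooth p"
  proof (subst smooth_iff, intro conjI allI)
    show "p differentiable (at z)" for z using deriv differentiable_def by blast
    fix v :: pt
    have "Dir v p = (\<lambda>z. W1 z * fst v + W2 z * snd v)" by (rule ext) (rule Dirp)
    then show "smooth (Dir v p)" by (simp add: smooth_add smooth_mult s1 s2)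
  qed
  have pw1: "\<And>z. W1 (z + (1,0)) = W1 z" "\<And>z. W1 (z + (0,1)) = W1 z"
    using tfun_periodic[OF t1] unfolding periodic_shift by auto
  have pw2: "\<And>z. W2 (z + (1,0)) = W2 z" "\<And>z. W2 (z + (0,1)) = W2 z"
    using tfun_periodic[OF t2] unfolding periodic_shift by auto
  obtain c1 where c1: "\<And>z. p (z + (1,0)) - p z = c1" using shift_const[OF deriv pw1(1) pw2(1)] by blast
  obtain c2 where c2: "\<And>z. p (z + (0,1)) - p z = c2" using shift_const[OF deriv pw1(2) pw2(2)] by blast
  have dp: "\<And>z. p differentiable (at z)" using deriv differentiable_def by blast
  have "integral {0..1} (\<lambda>x. W1 (x,y)) = c1" for y
  proof -
    have "integral {0..1} (\<lambda>s. Dir (1,0) p ((0,y) + s *\<^sub>R (1,0))) = p ((0,y) + 1 *\<^sub>R (1,0)) - p ((0,y) + 0 *\<^sub>R (1,0))"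
      by (rule line_ftc_int[OF dp]) simp
    then show ?thesis using c1[of "(0,y)"] by (simp add: Dirp)
  qed
  then have "tint W1 = c1" by (rule tint_x_lines[OF s1])
  then have c10: "c1 = 0" using m1 by simp
  have "integral {0..1} (\<lambda>y. W2 (x,y)) = c2" for x
  proof -
    have "integral {0..1} (\<lambda>s. Dir (0,1) p ((x,0) + s *\<^sub>R (0,1))) = p ((x,0) + 1 *\<^sub>R (0,1)) - p ((x,0) + 0 *\<^sub>R (0,1))"
      by (rule line_ftc_int[OF dp]) simp
    then show ?thesis using c2[of "(x,0)"] by (simp add: Dirp)
  qed
  then have "tint W2 = c2" by (rule tint_y_lines[OF s2])
  then have c20: "c2 = 0" using m2 by simp
  have "periodic p" unfolding periodic_shift using c1 c2 c10 c20 by (metis eq_iff_diff_eq_0)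
  then show ?thesis using sp Dxp Dyp unfolding tfun_def by blast
qed

definition mvec :: "(pt \<Rightarrow> pt) \<Rightarrow> pt" where
  "mvec X = (tint (\<lambda>w. fst (X w)), tint (\<lambda>w. snd (X w)))"

lemma Xsigma_D:
  assumes "X \<in> Xsigma"
  shows "tfun (\<lambda>w. fst (X w))" "tfun (\<lambda>w. snd (X w))"
    "\<And>z. Dx (\<lambda>w. fst (X w)) z + Dy (\<lambda>w. snd (X w)) z = 0"
  using assms unfolding Xsigma_def vf_def divg_def by auto

lemma zero_grad_const:
  assumes t: "tfun f" and dx: "\<And>z. Dx f z = 0" and dy: "\<And>z. Dy f z = 0"
  shows "f z = tint f"
proof -
  have s: "smooth f" using t tfun_smooth by blast
  have "(f has_derivative (\<lambda>h. 0)) (at x within UNIV)" for x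
  proof -
    have "(f has_derivative (\<lambda>v. Dir v f x)) (at x)" using Dir_works[OF smooth_diff[OF s]] .
    moreover have "(\<lambda>v. Dir v f x) = (\<lambda>v. 0)" using Dir_pt[OF smooth_diff[OF s]] dx dy by auto
    ultimately show ?thesis by simp
  qed
  from has_derivative_zero_constant[of UNIV, OF _ this] obtain c where c: "\<And>x. f x = c" by auto
  then have "f = (\<lambda>x. c)" by auto
  then show ?thesis using c by (simp add: tint_const)
qed

lemma const_Dx_zero: "tfun f \<Longrightarrow> (\<And>z. Dx f z = k) \<Longrightarrow> k = 0"
proof -
  assume t: "tfun f" and d: "\<And>z. Dx f z = k"
  have "Dx f = (\<lambda>z. k)" using d by auto
  then show "k = 0" using tint_Dx_zero[OF t] by (simp add: tint_const)
qed

lemma const_Dy_zero: "tfun f \<Longrightarrow> (\<And>z. Dy f z = k) \<Longrightarrow> k = 0"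
proof -
  assume t: "tfun f" and d: "\<And>z. Dy f z = k"
  have "Dy f = (\<lambda>z. k)" using d by auto
  then show "k = 0" using tint_Dy_zero[OF t] by (simp add: tint_const)
qed

lemma uniq_fun:
  assumes tf: "tfun f" and tg: "tfun g" and m: "tint f = tint g"
    and dx: "\<And>z. Dx f z - Dx g z = k1" and dy: "\<And>z. Dy f z - Dy g z = k2"
  shows "f = g"
proof -
  have sf: "smooth f" and sg: "smooth g" using tf tg tfun_smooth by blast+
  define d where "d z = f z - g z" for z
  have td: "tfun d" unfolding d_def[abs_def] by (rule tfun_diff[OF tf tg])
  have dxd: "Dx d z = k1" for z unfolding d_def[abs_def] using Dx_diff[OF sf sg] dx by simp
  have dyd: "Dy d z = k2" for z unfolding d_def[abs_def] using Dy_diff[OF sf sg] dy by simp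
  have k1: "k1 = 0" using const_Dx_zero[OF td dxd] .
  have k2: "k2 = 0" using const_Dy_zero[OF td dyd] .
  have "tint d = 0" unfolding d_def[abs_def] using tint_diff[OF sf sg] m by simp
  then have "d z = 0" for z using zero_grad_const[OF td] dxd dyd k1 k2 by simp
  then show ?thesis unfolding d_def by auto
qed

lemma ham_decomp:
  assumes X: "X \<in> Xsigma"
  shows "\<exists>h. tfun h \<and> tint h = 0 \<and> (\<forall>z. X z = mvec X + ham h z)"
proof -
  note XD = Xsigma_D[OF X]
  have s1: "smooth (\<lambda>w. fst (X w))" and s2: "smooth (\<lambda>w. snd (X w))" using XD tfun_smooth by blast+
  define c where "c = mvec X"
  define W1 where "W1 z = snd c - snd (X z)" for z
  define W2 where "W2 z = fst (X z) - fst c" for z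
  have t1: "tfun W1" unfolding W1_def[abs_def] by (intro tfun_diff tfun_const XD)
  have t2: "tfun W2" unfolding W2_def[abs_def] by (intro tfun_diff tfun_const XD)
  have m1: "tint W1 = 0" unfolding W1_def[abs_def] c_def mvec_def
    using tint_diff[OF smooth_const s2] by (simp add: tint_const)
  have m2: "tint W2 = 0" unfolding W2_def[abs_def] c_def mvec_def
    using tint_diff[OF s1 smooth_const] by (simp add: tint_const)
  have curl: "Dy W1 z = Dx W2 z" for z
    unfolding W1_def[abs_def] W2_def[abs_def]
    using Dy_diff[OF smooth_const s2] Dx_diff[OF s1 smooth_const] XD(3)[of z]
    by (simp add: Dx_const Dy_const)
  obtain p where p: "tfun p" "\<And>z. Dx p z = W1 z" "\<And>z. Dy p z = W2 z"
    using poincare[OF t1 t2 m1 m2 curl] by blast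
  define h where "h z = p z - tint p" for z
  have sp: "smooth p" using p(1) tfun_smooth by blast
  have th: "tfun h" unfolding h_def[abs_def] by (intro tfun_diff p(1) tfun_const)
  have mh: "tint h = 0" unfolding h_def[abs_def] using tint_diff[OF sp smooth_const] by (simp add: tint_const)
  have "Dx h z = W1 z" "Dy h z = W2 z" for z
    unfolding h_def[abs_def] using Dx_diff[OF sp smooth_const] Dy_diff[OF sp smooth_const] p
    by (simp_all add: Dx_const Dy_const)
  then have "X z = mvec X + ham h z" for z
    unfolding ham_def W1_def W2_def c_def[symmetric] by (simp add: prod_eq_iff)
  then show ?thesis using th mh by blast
qed

lemma ham_part_eq:
  assumes th: "tfun h" and mh: "tint h = 0" and Xh: "\<And>z. X z = c + ham h z"
  shows "ham_part X = h"
  unfolding ham_part_def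
proof (rule the_equality)
  show "tfun h \<and> tint h = 0 \<and> (\<exists>c. \<forall>z. X z = c + ham h z)" using assms by blast
next
  fix f assume "tfun f \<and> tint f = 0 \<and> (\<exists>c. \<forall>z. X z = c + ham f z)"
  then obtain c' where tf: "tfun f" and mf: "tint f = 0" and Xf: "\<And>z. X z = c' + ham f z" by blast
  have e: "c' + ham f z = c + ham h z" for z using Xf Xh by metis
  show "f = h"
  proof (rule uniq_fun[OF tf th])
    show "tint f = tint h" using mf mh by simp
    show "Dx f z - Dx h z = snd c' - snd c" for z using e[of z] unfolding ham_def by (auto simp: prod_eq_iff)
    show "Dy f z - Dy h z = fst c - fst c'" for z using e[of z] unfolding ham_def by (auto simp: prod_eq_iff)
  qed
qed

lemma psi_eq:
  assumes X: "X \<in> Xsigma" and th: "tfun h" and mh: "tint h = 0" and Xh: "\<And>z. X z = mvec X + ham h z"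
  shows "psi X = h"
  unfolding psi_def
proof (rule the_equality)
  have dh: "dfun h z = isigma X z - avg1 (isigma X) z" for z
    using Xh[of z] unfolding dfun_def isigma_def avg1_def mvec_def ham_def
    by (auto simp: prod_eq_iff tint_uminus)
  show "tfun h \<and> (\<forall>z. dfun h z = isigma X z - avg1 (isigma X) z) \<and> tint h = 0"
    using th mh dh by blast
  fix f assume "tfun f \<and> (\<forall>z. dfun f z = isigma X z - avg1 (isigma X) z) \<and> tint f = 0"
  then have tf: "tfun f" and df: "\<And>z. dfun f z = dfun h z" and mf: "tint f = 0" using dh by auto
  show "f = h"
  proof (rule uniq_fun[OF tf th])
    show "tint f = tint h" using mf mh by simp
    show "Dx f z - Dx h z = 0" for z using df[of z] unfolding dfun_def by simp
    show "Dy f z - Dy h z = 0" for z using df[of z] unfolding dfun_def by simp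
  qed
qed

lemma ham_in_Xsigma: "tfun h \<Longrightarrow> ham h \<in> Xsigma"
proof -
  assume th: "tfun h"
  have sh: "smooth h" using th tfun_smooth by blast
  have "vf (ham h)" unfolding vf_def ham_def using tfun_Dy[OF th] tfun_uminus[OF tfun_Dx[OF th]] by simp
  moreover have "divg (ham h) z = 0" for z
    unfolding divg_def ham_def using Dy_uminus[OF smooth_Dx[OF sh]] schwarz_xy[OF sh] by simp
  ultimately show ?thesis unfolding Xsigma_def by blast
qed

lemma const_in_Xsigma: "(\<lambda>z. c) \<in> Xsigma"
  unfolding Xsigma_def vf_def divg_def by (simp add: Dx_const Dy_const)

lemma ham_zero: "ham (\<lambda>z. 0) = (\<lambda>z. (0,0))"
  unfolding ham_def by (simp add: Dx_const Dy_const)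

lemma ham_part_const: "ham_part (\<lambda>z. c) = (\<lambda>z. 0)"
  by (rule ham_part_eq[where c=c]) (auto simp: tint_const ham_zero zero_prod_def)

lemma ham_part_ham: "tfun h \<Longrightarrow> tint h = 0 \<Longrightarrow> ham_part (ham h) = h"
  by (rule ham_part_eq[where c=0]) auto

definition dirc :: "pt \<Rightarrow> (pt \<Rightarrow> real) \<Rightarrow> pt \<Rightarrow> real" where
  "dirc c f z = fst c * Dx f z + snd c * Dy f z"

lemma tfun_dirc: "tfun f \<Longrightarrow> tfun (dirc c f)"
  unfolding dirc_def[abs_def] by (intro tfun_add tfun_cmul tfun_Dx tfun_Dy)

lemma smooth_dirc: "smooth f \<Longrightarrow> smooth (dirc c f)"
  unfolding dirc_def[abs_def] by (intro smooth_add smooth_cmul smooth_Dx smooth_Dy)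

lemma tint_dirc: "tfun f \<Longrightarrow> tint (dirc c f) = 0"
proof -
  assume t: "tfun f"
  have s: "smooth f" using t tfun_smooth by blast
  have "tint (dirc c f) = tint (\<lambda>z. fst c * Dx f z) + tint (\<lambda>z. snd c * Dy f z)"
    unfolding dirc_def[abs_def] by (intro tint_add smooth_cmul smooth_Dx smooth_Dy s)
  also have "\<dots> = 0" using tint_Dx_zero[OF t] tint_Dy_zero[OF t] by (simp add: tint_cmul)
  finally show ?thesis .
qed

lemma dirc_add: "smooth f \<Longrightarrow> smooth g \<Longrightarrow> dirc c (\<lambda>z. f z + g z) z = dirc c f z + dirc c g z"
  unfolding dirc_def by (simp add: Dx_add Dy_add algebra_simps)
lemma dirc_diff: "smooth f \<Longrightarrow> smooth g \<Longrightarrow> dirc c (\<lambda>z. f z - g z) z = dirc c f z - dirc c g z"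
  unfolding dirc_def by (simp add: Dx_diff Dy_diff algebra_simps)
lemma dirc_mult: "smooth f \<Longrightarrow> smooth g \<Longrightarrow> dirc c (\<lambda>z. f z * g z) z = dirc c f z * g z + f z * dirc c g z"
  unfolding dirc_def by (simp add: Dx_mult Dy_mult algebra_simps)
lemma dirc_uminus: "smooth f \<Longrightarrow> dirc c (\<lambda>z. - f z) z = - dirc c f z"
  unfolding dirc_def by (simp add: Dx_uminus Dy_uminus algebra_simps)
lemma Dx_dirc: "smooth f \<Longrightarrow> Dx (dirc c f) z = dirc c (Dx f) z"
  unfolding dirc_def[abs_def] using schwarz_xy[of f z]
  by (simp add: Dx_add Dx_cmul smooth_cmul smooth_Dx smooth_Dy)
lemma Dy_dirc: "smooth f \<Longrightarrow> Dy (dirc c f) z = dirc c (Dy f) z"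
  unfolding dirc_def[abs_def] using schwarz_xy[of f z]
  by (simp add: Dy_add Dy_cmul smooth_cmul smooth_Dx smooth_Dy)

lemma tint_parts_dirc:
  assumes "tfun f" "tfun g"
  shows "tint (\<lambda>z. dirc c f z * g z) = - tint (\<lambda>z. f z * dirc c g z)"
proof -
  have sf: "smooth f" and sg: "smooth g" using assms tfun_smooth by blast+
  have "tint (\<lambda>z. dirc c f z * g z) = tint (\<lambda>z. fst c * (Dx f z * g z) + snd c * (Dy f z * g z))"
    unfolding dirc_def by (simp add: algebra_simps)
  also have "\<dots> = fst c * tint (\<lambda>z. Dx f z * g z) + snd c * tint (\<lambda>z. Dy f z * g z)"
    by (subst tint_add) (auto intro!: smooth_cmul smooth_mult smooth_Dx smooth_Dy sf sg simp: tint_cmul)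
  also have "\<dots> = - (fst c * tint (\<lambda>z. f z * Dx g z) + snd c * tint (\<lambda>z. f z * Dy g z))"
    using tint_parts_x[OF assms] tint_parts_y[OF assms] by simp
  also have "fst c * tint (\<lambda>z. f z * Dx g z) + snd c * tint (\<lambda>z. f z * Dy g z) = tint (\<lambda>z. fst c * (f z * Dx g z) + snd c * (f z * Dy g z))"
    by (subst tint_add) (auto intro!: smooth_cmul smooth_mult smooth_Dx smooth_Dy sf sg simp: tint_cmul)
  also have "\<dots> = tint (\<lambda>z. f z * dirc c g z)"
    unfolding dirc_def by (simp add: algebra_simps)
  finally show ?thesis .
qed

lemma ham_uminus: "smooth f \<Longrightarrow> ham (\<lambda>z. - f z) z = - ham f z"
  unfolding ham_def by (simp add: Dx_uminus Dy_uminus)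

lemma br1:
  assumes "tfun f"
  shows "lie_bracket (\<lambda>z. c) (ham f) = ham (\<lambda>z. - dirc c f z)"
proof
  fix z
  have s: "smooth f" using assms tfun_smooth by blast
  have e1: "(\<lambda>w. fst (ham f w)) = Dy f" and e2: "(\<lambda>w. snd (ham f w)) = (\<lambda>w. - Dx f w)"
    unfolding ham_def by auto
  show "lie_bracket (\<lambda>z. c) (ham f) z = ham (\<lambda>z. - dirc c f z) z"
    unfolding lie_bracket_def vf_bracket_def act_def e1 e2
    using ham_uminus[OF smooth_dirc[OF s], of c z] Dx_dirc[OF s, of c z] Dy_dirc[OF s, of c z]
    by (simp add: ham_def Dx_const Dy_const dirc_def Dx_uminus[OF smooth_Dx[OF s]] Dy_uminus[OF smooth_Dx[OF s]])
qed

lemma br2: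
  assumes "tfun h"
  shows "lie_bracket (ham h) (\<lambda>z. c) = ham (dirc c h)"
proof
  fix z
  have s: "smooth h" using assms tfun_smooth by blast
  have "lie_bracket (ham h) (\<lambda>z. c) z = - lie_bracket (\<lambda>z. c) (ham h) z"
    unfolding lie_bracket_def vf_bracket_def by simp
  also have "\<dots> = - ham (\<lambda>z. - dirc c h z) z" using br1[OF assms] by simp
  also have "\<dots> = ham (dirc c h) z" using ham_uminus[OF smooth_dirc[OF s]] by simp
  finally show "lie_bracket (ham h) (\<lambda>z. c) z = ham (dirc c h) z" .
qed

lemma closed_form_D:
  assumes "closed_form \<alpha>"
  shows "tfun (\<lambda>w. fst (\<alpha> w))" "tfun (\<lambda>w. snd (\<alpha> w))"
  using assms unfolding closed_form_def vf_def by auto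

lemma omega_ham:
  assumes "tfun h" "tint h = 0"
  shows "omega \<alpha> X (ham h) = tint (\<lambda>z. ham_part X z * (fst (\<alpha> z) * Dy h z - snd (\<alpha> z) * Dx h z))"
  unfolding omega_def eval1_def ham_part_ham[OF assms] by (simp add: ham_def)

lemma omega_const2: "omega \<alpha> X (\<lambda>z. c) = 0"
  unfolding omega_def eval1_def ham_part_const ham_zero by (simp add: tint_const)

lemma cocycle_K:
  assumes cf: "closed_form \<alpha>" and coc: "is_2cocycle (omega \<alpha>)"
    and tf: "tfun f" and mf: "tint f = 0" and th: "tfun h" and mh: "tint h = 0"
  shows "tint (\<lambda>z. f z * (dirc c (\<lambda>w. fst (\<alpha> w)) z * Dy h z - dirc c (\<lambda>w. snd (\<alpha> w)) z * Dx h z)) = 0"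
proof -
  define a where "a = (\<lambda>w. fst (\<alpha> w))"
  define b where "b = (\<lambda>w. snd (\<alpha> w))"
  have ta: "tfun a" and tb: "tfun b" unfolding a_def b_def using closed_form_D[OF cf] by auto
  have sa: "smooth a" and sb: "smooth b" and sf: "smooth f" and sh: "smooth h"
    using ta tb tf th tfun_smooth by blast+
  define E where "E g z = a z * Dy g z - b z * Dx g z" for g z
  have tE: "tfun g \<Longrightarrow> tfun (E g)" for g
    unfolding E_def[abs_def] by (intro tfun_diff tfun_mult ta tb tfun_Dx tfun_Dy)
  have om: "tfun g \<Longrightarrow> tint g = 0 \<Longrightarrow> omega \<alpha> X (ham g) = tint (\<lambda>z. ham_part X z * E g z)" for X g
    using omega_ham unfolding E_def a_def b_def by blast
  have tdf: "tfun (\<lambda>z. - dirc c f z)" using tfun_uminus[OF tfun_dirc[OF tf]] .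
  have mdf: "tint (\<lambda>z. - dirc c f z) = 0" using tint_dirc[OF tf] by (simp add: tint_uminus)
  have tdh: "tfun (dirc c h)" using tfun_dirc[OF th] .
  have mdh: "tint (dirc c h) = 0" using tint_dirc[OF th] .
  have Xc: "(\<lambda>z. c) \<in> Xsigma" by (rule const_in_Xsigma)
  have Xf: "ham f \<in> Xsigma" using ham_in_Xsigma[OF tf] .
  have Xh: "ham h \<in> Xsigma" using ham_in_Xsigma[OF th] .
  have Xdh: "ham (dirc c h) \<in> Xsigma" using ham_in_Xsigma[OF tdh] .
  have J: "omega \<alpha> (lie_bracket (\<lambda>z. c) (ham f)) (ham h) + omega \<alpha> (lie_bracket (ham f) (ham h)) (\<lambda>z. c)
      + omega \<alpha> (lie_bracket (ham h) (\<lambda>z. c)) (ham f) = 0"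
    using coc Xc Xf Xh unfolding is_2cocycle_def by blast
  have w1: "omega \<alpha> (lie_bracket (\<lambda>z. c) (ham f)) (ham h) = tint (\<lambda>z. - dirc c f z * E h z)"
    unfolding br1[OF tf] om[OF th mh] ham_part_ham[OF tdf mdf] ..
  have w2: "omega \<alpha> (lie_bracket (ham f) (ham h)) (\<lambda>z. c) = 0" by (rule omega_const2)
  have "omega \<alpha> (lie_bracket (ham h) (\<lambda>z. c)) (ham f) = omega \<alpha> (ham (dirc c h)) (ham f)"
    unfolding br2[OF th] ..
  also have "\<dots> = - omega \<alpha> (ham f) (ham (dirc c h))"
    using coc Xdh Xf unfolding is_2cocycle_def by blast
  also have "\<dots> = - tint (\<lambda>z. f z * E (dirc c h) z)"
    unfolding om[OF tdh mdh] ham_part_ham[OF tf mf] ..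
  finally have w3: "omega \<alpha> (lie_bracket (ham h) (\<lambda>z. c)) (ham f) = - tint (\<lambda>z. f z * E (dirc c h) z)" .
  have "tint (\<lambda>z. - dirc c f z * E h z) = - tint (\<lambda>z. dirc c f z * E h z)"
    using tint_uminus[of "\<lambda>z. dirc c f z * E h z"] by simp
  also have "\<dots> = tint (\<lambda>z. f z * dirc c (E h) z)"
    using tint_parts_dirc[OF tf tE[OF th]] by simp
  finally have w1': "tint (\<lambda>z. - dirc c f z * E h z) = tint (\<lambda>z. f z * dirc c (E h) z)" .
  have I: "tint (\<lambda>z. f z * dirc c (E h) z) - tint (\<lambda>z. f z * E (dirc c h) z) = 0"
    using J w1 w2 w3 w1' by simp
  have sdE: "smooth (\<lambda>z. f z * dirc c (E h) z)" and sEd: "smooth (\<lambda>z. f z * E (dirc c h) z)"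
    using tE[OF th] tE[OF tdh] tf by (auto intro!: tfun_smooth tfun_mult tfun_dirc)
  have pt: "dirc c (E h) z - E (dirc c h) z = dirc c a z * Dy h z - dirc c b z * Dx h z" for z
  proof -
    have "dirc c (E h) z = dirc c (\<lambda>z. a z * Dy h z) z - dirc c (\<lambda>z. b z * Dx h z) z"
      unfolding E_def by (rule dirc_diff) (auto intro!: smooth_mult smooth_Dx smooth_Dy sa sb sh)
    also have "\<dots> = (dirc c a z * Dy h z + a z * dirc c (Dy h) z) - (dirc c b z * Dx h z + b z * dirc c (Dx h) z)"
      by (simp add: dirc_mult sa sb smooth_Dx smooth_Dy sh)
    finally have e1: "dirc c (E h) z = (dirc c a z * Dy h z + a z * dirc c (Dy h) z) - (dirc c b z * Dx h z + b z * dirc c (Dx h) z)" .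
    have e2: "E (dirc c h) z = a z * dirc c (Dy h) z - b z * dirc c (Dx h) z"
      unfolding E_def Dx_dirc[OF sh] Dy_dirc[OF sh] ..
    show ?thesis unfolding e1 e2 by (simp add: algebra_simps)
  qed
  have "tint (\<lambda>z. f z * dirc c (E h) z) - tint (\<lambda>z. f z * E (dirc c h) z) =
     tint (\<lambda>z. f z * dirc c (E h) z - f z * E (dirc c h) z)"
    using tint_diff[OF sdE sEd] by simp
  also have "(\<lambda>z. f z * dirc c (E h) z - f z * E (dirc c h) z) = (\<lambda>z. f z * (dirc c a z * Dy h z - dirc c b z * Dx h z))"
    using pt by (auto simp: right_diff_distrib[symmetric])
  finally show ?thesis using I unfolding a_def b_def by simp
qed

lemma periodic_nat:
  assumes "periodic f"
  shows "f (x + real n, y) = f (x, y)" "f (x, y + real n) = f (x, y)"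
proof -
  show "f (x + real n, y) = f (x, y)"
  proof (induction n arbitrary: x)
    case (Suc n) then show ?case using assms unfolding periodic_def
      by (metis add.commute add.left_commute of_nat_Suc)
  qed simp
  show "f (x, y + real n) = f (x, y)"
  proof (induction n arbitrary: y)
    case (Suc n) then show ?case using assms unfolding periodic_def
      by (metis add.commute add.left_commute of_nat_Suc)
  qed simp
qed

lemma periodic_int:
  assumes "periodic f"
  shows "f (x + of_int n, y) = f (x, y) \<and> f (x, y + of_int n) = f (x, y)"
proof (cases "n \<ge> 0")
  case True
  then have e: "(of_int n::real) = real (nat n)" by simp
  have 1: "f (x + real (nat n), y) = f (x, y)" by (rule periodic_nat(1)[OF assms])
  have 2: "f (x, y + real (nat n)) = f (x, y)" by (rule periodic_nat(2)[OF assms])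
  show ?thesis unfolding e using 1 2 by (rule conjI)
next
  case False
  then have e: "(of_int n::real) = - real (nat (- n))" by simp
  have 1: "f ((x - real (nat (-n))) + real (nat (-n)), y) = f (x - real (nat (-n)), y)"
    by (rule periodic_nat(1)[OF assms])
  have 2: "f (x, (y - real (nat (-n))) + real (nat (-n))) = f (x, y - real (nat (-n)))"
    by (rule periodic_nat(2)[OF assms])
  show ?thesis unfolding e using 1 2 by simp
qed

lemma periodic_ext:
  assumes "periodic f" and "\<And>z. z \<in> cbox (0,0) (1,1) \<Longrightarrow> f z = 0"
  shows "f z = 0"
proof -
  obtain x y where z: "z = (x, y)" by (cases z)
  define x' where "x' = x - of_int (floor x)"
  define y' where "y' = y - of_int (floor y)"
  have "f (x, y) = f (x' + of_int (floor x), y)" unfolding x'_def by simp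
  also have "\<dots> = f (x', y)" using periodic_int[OF assms(1), of x' "floor x" y] by (rule conjunct1)
  also have "\<dots> = f (x', y' + of_int (floor y))" unfolding y'_def by simp
  also have "\<dots> = f (x', y')" using periodic_int[OF assms(1), of x' "floor y" y'] by (rule conjunct2)
  also have "\<dots> = 0"
  proof (rule assms(2))
    have "0 \<le> x'" "x' \<le> 1" "0 \<le> y'" "y' \<le> 1" unfolding x'_def y'_def
      using floor_correct[of x] floor_correct[of y] by linarith+
    then show "(x', y') \<in> cbox (0, 0) (1, 1)" by (simp add: cbox_Pair_iff)
  qed
  finally show ?thesis using z by simp
qed

lemma orth_const_cbox:
  assumes tK: "tfun K" and orth: "\<And>f. tfun f \<Longrightarrow> tint f = 0 \<Longrightarrow> tint (\<lambda>z. f z * K z) = 0"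
    and z: "z \<in> cbox (0,0) (1,1)"
  shows "K z = tint K"
proof -
  have sK: "smooth K" using tK tfun_smooth by blast
  define m where "m = tint K"
  define f where "f z = K z - m" for z
  have tf: "tfun f" unfolding f_def[abs_def] by (intro tfun_diff tK tfun_const)
  have sf: "smooth f" using tf tfun_smooth by blast
  have mf: "tint f = 0" unfolding f_def[abs_def] m_def using tint_diff[OF sK smooth_const] by (simp add: tint_const)
  have o: "tint (\<lambda>z. f z * K z) = 0" by (rule orth[OF tf mf])
  have "tint (\<lambda>z. f z * f z) = tint (\<lambda>z. f z * K z - m * f z)"
    unfolding f_def by (simp add: algebra_simps)
  also have "\<dots> = tint (\<lambda>z. f z * K z) - tint (\<lambda>z. m * f z)"
    by (rule tint_diff) (intro smooth_mult smooth_cmul sf sK)+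
  also have "\<dots> = 0" using o mf by (simp add: tint_cmul)
  finally have i0: "tint (\<lambda>z. f z * f z) = 0" .
  have sff: "smooth (\<lambda>z. f z * f z)" by (intro smooth_mult sf)
  have hi: "((\<lambda>z. f z * f z) has_integral 0) (cbox (0,0) (1,1))"
    using integrable_integral[OF tint_integrable[OF sff]] i0 unfolding tint_def by simp
  have ne: "box (0::real, 0::real) (1, 1) \<noteq> {}"
  proof -
    have "(1/2::real, 1/2::real) \<in> box (0, 0) (1, 1)" by (simp add: box_pair_iff)
    then show ?thesis by blast
  qed
  have "f z * f z = 0"
    by (rule has_integral_0_cbox_imp_0[OF cont_tint[OF sff] _ hi ne z]) simp
  then show ?thesis unfolding f_def m_def by simp
qed

definition sx :: "real \<Rightarrow> pt \<Rightarrow> real" where "sx p z = sin (2*pi * fst z + p)"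
definition sy :: "real \<Rightarrow> pt \<Rightarrow> real" where "sy p z = sin (2*pi * snd z + p)"

lemma sx_deriv: "(sx p has_derivative (\<lambda>v. cos (2*pi * fst z + p) * (2*pi * fst v))) (at z)"
  unfolding sx_def[abs_def] by (auto intro!: derivative_eq_intros)
lemma sy_deriv: "(sy p has_derivative (\<lambda>v. cos (2*pi * snd z + p) * (2*pi * snd v))) (at z)"
  unfolding sy_def[abs_def] by (auto intro!: derivative_eq_intros)

lemma sx_Dx: "Dx (sx p) z = 2*pi*cos (2*pi * fst z + p)" unfolding Dx_def Dir_eq[OF sx_deriv] by simp
lemma sx_Dy: "Dy (sx p) z = 0" unfolding Dy_def Dir_eq[OF sx_deriv] by simp
lemma sy_Dx: "Dx (sy p) z = 0" unfolding Dx_def Dir_eq[OF sy_deriv] by simp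
lemma sy_Dy: "Dy (sy p) z = 2*pi*cos (2*pi * snd z + p)" unfolding Dy_def Dir_eq[OF sy_deriv] by simp

lemma sx_tfun: "tfun (sx p)"
proof -
  have "smooth (\<lambda>z::pt. 1 * sin (2*pi * fst z + p))" by (rule smooth_sin) (intro bounded_linear_intros)
  moreover have "periodic (sx p)" unfolding periodic_def sx_def
    using sin_periodic[of "2*pi*x + p" for x] by (simp add: algebra_simps)
  ultimately show ?thesis unfolding tfun_def sx_def[abs_def] by simp
qed

lemma sy_tfun: "tfun (sy p)"
proof -
  have "smooth (\<lambda>z::pt. 1 * sin (2*pi * snd z + p))" by (rule smooth_sin) (intro bounded_linear_intros)
  moreover have "periodic (sy p)" unfolding periodic_def sy_def
    using sin_periodic[of "2*pi*x + p" for x] by (simp add: algebra_simps)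
  ultimately show ?thesis unfolding tfun_def sy_def[abs_def] by simp
qed

lemma sx_mean: "tint (sx p) = 0"
proof -
  have "Dx (\<lambda>z. (1/(2*pi)) * sx (p - pi/2) z) z = sx p z" for z
    using Dx_cmul[OF tfun_smooth[OF sx_tfun], of "1/(2*pi)" "p - pi/2" z]
    by (simp add: sx_Dx sx_def cos_diff algebra_simps)
  then have e: "sx p = Dx (\<lambda>z. (1/(2*pi)) * sx (p - pi/2) z)" by auto
  show ?thesis by (subst e) (rule tint_Dx_zero[OF tfun_cmul[OF sx_tfun]])
qed

lemma sy_mean: "tint (sy p) = 0"
proof -
  have "Dy (\<lambda>z. (1/(2*pi)) * sy (p - pi/2) z) z = sy p z" for z
    using Dy_cmul[OF tfun_smooth[OF sy_tfun], of "1/(2*pi)" "p - pi/2" z]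
    by (simp add: sy_Dy sy_def cos_diff algebra_simps)
  then have e: "sy p = Dy (\<lambda>z. (1/(2*pi)) * sy (p - pi/2) z)" by auto
  show ?thesis by (subst e) (rule tint_Dy_zero[OF tfun_cmul[OF sy_tfun]])
qed

lemma dirc_b_zero:
  assumes cf: "closed_form \<alpha>" and coc: "is_2cocycle (omega \<alpha>)"
  shows "dirc c (\<lambda>w. snd (\<alpha> w)) z = 0 \<and> dirc c (\<lambda>w. fst (\<alpha> w)) z = 0"
proof -
  define a where "a = (\<lambda>w. fst (\<alpha> w))"
  define b where "b = (\<lambda>w. snd (\<alpha> w))"
  have ta: "tfun a" and tb: "tfun b" unfolding a_def b_def using closed_form_D[OF cf] by auto
  define K where "K h z = dirc c a z * Dy h z - dirc c b z * Dx h z" for h z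
  have tK: "tfun h \<Longrightarrow> tfun (K h)" for h
    unfolding K_def[abs_def] by (intro tfun_diff tfun_mult tfun_dirc ta tb tfun_Dx tfun_Dy)
  have kc: "K h z = tint (K h)" if th: "tfun h" and mh: "tint h = 0" and z: "z \<in> cbox (0,0) (1,1)" for h z
  proof (rule orth_const_cbox[OF tK[OF th] _ z])
    fix f assume "tfun f" "tint f = 0"
    then show "tint (\<lambda>z. f z * K h z) = 0"
      using cocycle_K[OF cf coc _ _ th mh] unfolding K_def a_def b_def by blast
  qed
  have z0: "(1/4::real, 0::real) \<in> cbox (0,0) (1,1)" "(0::real, 0::real) \<in> cbox (0,0) (1,1)"
    by (auto simp: cbox_Pair_iff)
  have Kx: "K (sx p) z = - dirc c b z * (2*pi*cos (2*pi * fst z + p))" for p z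
    unfolding K_def sx_Dx sx_Dy by simp
  have cosb: "dirc c b z * cos (2*pi * fst z) = 0" if z: "z \<in> cbox (0,0) (1,1)" for z
  proof -
    have "K (sx 0) (1/4, 0) = 0" unfolding Kx by simp
    then have "tint (K (sx 0)) = 0" using kc[OF sx_tfun sx_mean z0(1)] by simp
    then have "K (sx 0) z = 0" using kc[OF sx_tfun sx_mean z] by simp
    then show ?thesis unfolding Kx by simp
  qed
  have sinb: "dirc c b z * sin (2*pi * fst z) = 0" if z: "z \<in> cbox (0,0) (1,1)" for z
  proof -
    have "K (sx (-pi/2)) (0, 0) = 0" unfolding Kx by simp
    then have "tint (K (sx (-pi/2))) = 0" using kc[OF sx_tfun sx_mean z0(2)] by simp
    then have "K (sx (-pi/2)) z = 0" using kc[OF sx_tfun sx_mean z] by simp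
    then show ?thesis unfolding Kx by (simp add: cos_diff)
  qed
  have bz: "dirc c b z = 0" for z
  proof (rule periodic_ext[OF tfun_periodic[OF tfun_dirc[OF tb]]])
    fix z :: pt assume z: "z \<in> cbox (0,0) (1,1)"
    have "dirc c b z = dirc c b z * (sin (2*pi * fst z))\<^sup>2 + dirc c b z * (cos (2*pi * fst z))\<^sup>2"
      by (simp add: distrib_left[symmetric])
    also have "\<dots> = 0" using cosb[OF z] sinb[OF z] by (auto simp: power2_eq_square)
    finally show "dirc c b z = 0" .
  qed
  have Ky: "K (sy p) z = dirc c a z * (2*pi*cos (2*pi * snd z + p))" for p z
    unfolding K_def sy_Dx sy_Dy by simp
  have z1: "(0::real, 1/4::real) \<in> cbox (0,0) (1,1)" by (auto simp: cbox_Pair_iff)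
  have cosa: "dirc c a z * cos (2*pi * snd z) = 0" if z: "z \<in> cbox (0,0) (1,1)" for z
  proof -
    have "K (sy 0) (0, 1/4) = 0" unfolding Ky by simp
    then have "tint (K (sy 0)) = 0" using kc[OF sy_tfun sy_mean z1] by simp
    then have "K (sy 0) z = 0" using kc[OF sy_tfun sy_mean z] by simp
    then show ?thesis unfolding Ky by simp
  qed
  have sina: "dirc c a z * sin (2*pi * snd z) = 0" if z: "z \<in> cbox (0,0) (1,1)" for z
  proof -
    have "K (sy (-pi/2)) (0, 0) = 0" unfolding Ky by simp
    then have "tint (K (sy (-pi/2))) = 0" using kc[OF sy_tfun sy_mean z0(2)] by simp
    then have "K (sy (-pi/2)) z = 0" using kc[OF sy_tfun sy_mean z] by simp
    then show ?thesis unfolding Ky by (simp add: cos_diff)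
  qed
  have az: "dirc c a z = 0" for z
  proof (rule periodic_ext[OF tfun_periodic[OF tfun_dirc[OF ta]]])
    fix z :: pt assume z: "z \<in> cbox (0,0) (1,1)"
    have "dirc c a z = dirc c a z * (sin (2*pi * snd z))\<^sup>2 + dirc c a z * (cos (2*pi * snd z))\<^sup>2"
      by (simp add: distrib_left[symmetric])
    also have "\<dots> = 0" using cosa[OF z] sina[OF z] by (auto simp: power2_eq_square)
    finally show "dirc c a z = 0" .
  qed
  show ?thesis using az bz unfolding a_def b_def by blast
qed

lemma alpha_const:
  assumes cf: "closed_form \<alpha>" and coc: "is_2cocycle (omega \<alpha>)"
  shows "\<alpha> z = (tint (\<lambda>w. fst (\<alpha> w)), tint (\<lambda>w. snd (\<alpha> w)))"
proof -
  have ta: "tfun (\<lambda>w. fst (\<alpha> w))" and tb: "tfun (\<lambda>w. snd (\<alpha> w))" using closed_form_D[OF cf] by auto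
  have dx: "Dx (\<lambda>w. fst (\<alpha> w)) z = 0 \<and> Dx (\<lambda>w. snd (\<alpha> w)) z = 0" for z
    using dirc_b_zero[OF cf coc, of "(1,0)" z] unfolding dirc_def by simp
  have dy: "Dy (\<lambda>w. fst (\<alpha> w)) z = 0 \<and> Dy (\<lambda>w. snd (\<alpha> w)) z = 0" for z
    using dirc_b_zero[OF cf coc, of "(0,1)" z] unfolding dirc_def by simp
  have "fst (\<alpha> z) = tint (\<lambda>w. fst (\<alpha> w))" using zero_grad_const[OF ta] dx dy by blast
  moreover have "snd (\<alpha> z) = tint (\<lambda>w. snd (\<alpha> w))" using zero_grad_const[OF tb] dx dy by blast
  ultimately show ?thesis by (simp add: prod_eq_iff)
qed

lemma act_mult: "smooth f \<Longrightarrow> smooth g \<Longrightarrow> act X (\<lambda>w. f w * g w) z = act X f z * g z + f z * act X g z"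
  unfolding act_def by (simp add: Dx_mult Dy_mult algebra_simps)
lemma act_add: "smooth f \<Longrightarrow> smooth g \<Longrightarrow> act X (\<lambda>w. f w + g w) z = act X f z + act X g z"
  unfolding act_def by (simp add: Dx_add Dy_add algebra_simps)
lemma smooth_act: "smooth (\<lambda>w. fst (X w)) \<Longrightarrow> smooth (\<lambda>w. snd (X w)) \<Longrightarrow> smooth h \<Longrightarrow> smooth (act X h)"
  unfolding act_def[abs_def] by (intro smooth_add smooth_mult smooth_Dx smooth_Dy)
lemma tfun_act: "tfun (\<lambda>w. fst (X w)) \<Longrightarrow> tfun (\<lambda>w. snd (X w)) \<Longrightarrow> tfun h \<Longrightarrow> tfun (act X h)"
  unfolding act_def[abs_def] by (intro tfun_add tfun_mult tfun_Dx tfun_Dy)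

lemma tint_act_zero:
  assumes X: "X \<in> Xsigma" and th: "tfun h"
  shows "tint (act X h) = 0"
proof -
  note XD = Xsigma_D[OF X]
  have s1: "smooth (\<lambda>w. fst (X w))" and s2: "smooth (\<lambda>w. snd (X w))" and sh: "smooth h"
    using XD th tfun_smooth by blast+
  have e: "act X h = (\<lambda>z. Dx (\<lambda>w. fst (X w) * h w) z + Dy (\<lambda>w. snd (X w) * h w) z)"
  proof
    fix z
    have "Dx (\<lambda>w. fst (X w) * h w) z + Dy (\<lambda>w. snd (X w) * h w) z =
       (Dx (\<lambda>w. fst (X w)) z + Dy (\<lambda>w. snd (X w)) z) * h z + act X h z"
      unfolding act_def Dx_mult[OF s1 sh] Dy_mult[OF s2 sh] by (simp add: algebra_simps)
    then show "act X h z = Dx (\<lambda>w. fst (X w) * h w) z + Dy (\<lambda>w. snd (X w) * h w) z"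
      using XD(3)[of z] by simp
  qed
  have "tint (act X h) = tint (\<lambda>z. Dx (\<lambda>w. fst (X w) * h w) z + Dy (\<lambda>w. snd (X w) * h w) z)"
    unfolding e ..
  also have "\<dots> = tint (Dx (\<lambda>w. fst (X w) * h w)) + tint (Dy (\<lambda>w. snd (X w) * h w))"
    by (rule tint_add) (intro smooth_Dx smooth_Dy smooth_mult s1 s2 sh)+
  also have "\<dots> = 0"
    using tint_Dx_zero[OF tfun_mult[OF XD(1) th]] tint_Dy_zero[OF tfun_mult[OF XD(2) th]] by simp
  finally show ?thesis .
qed

lemma inner_pt: "(a::pt) \<bullet> b = fst a * fst b + snd a * snd b"
  by (cases a, cases b) simp

lemma identI:
  assumes U: "U \<in> Xsigma" and V: "V \<in> Xsigma"
  shows "tint (\<lambda>z. U z \<bullet> lie_bracket U V z) = tint (\<lambda>z. nabla U U z \<bullet> V z)"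
proof -
  note UD = Xsigma_D[OF U] and VD = Xsigma_D[OF V]
  define u1 where "u1 = (\<lambda>w. fst (U w))"
  define u2 where "u2 = (\<lambda>w. snd (U w))"
  define v1 where "v1 = (\<lambda>w. fst (V w))"
  define v2 where "v2 = (\<lambda>w. snd (V w))"
  have t: "tfun u1" "tfun u2" "tfun v1" "tfun v2" using UD VD unfolding u1_def u2_def v1_def v2_def by auto
  then have s: "smooth u1" "smooth u2" "smooth v1" "smooth v2" using tfun_smooth by blast+
  define UV where "UV w = u1 w * v1 w + u2 w * v2 w" for w
  define UU where "UU w = u1 w * u1 w + u2 w * u2 w" for w
  have tUV: "tfun UV" unfolding UV_def[abs_def] using t by (intro tfun_add tfun_mult)
  have tUU: "tfun UU" unfolding UU_def[abs_def] using t by (intro tfun_add tfun_mult)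
  have sUV: "smooth UV" and sUU: "smooth UU" using tUV tUU tfun_smooth by blast+
  have pw: "U z \<bullet> lie_bracket U V z = (nabla U U z \<bullet> V z - act U UV z) + (1/2) * act V UU z" for z
  proof -
    have a1: "act U UV z = act U u1 z * v1 z + u1 z * act U v1 z + (act U u2 z * v2 z + u2 z * act U v2 z)"
      unfolding UV_def[abs_def] by (simp add: act_add act_mult smooth_mult s)
    have a2: "act V UU z = act V u1 z * u1 z + u1 z * act V u1 z + (act V u2 z * u2 z + u2 z * act V u2 z)"
      unfolding UU_def[abs_def] by (simp add: act_add act_mult smooth_mult s)
    show ?thesis unfolding a1 a2 inner_pt lie_bracket_def vf_bracket_def nabla_def
      u1_def[symmetric] u2_def[symmetric] v1_def[symmetric] v2_def[symmetric]
      by (simp add: u1_def u2_def v1_def v2_def algebra_simps)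
  qed
  have sN: "smooth (\<lambda>z. nabla U U z \<bullet> V z)"
    unfolding inner_pt nabla_def using s UD
    by (auto intro!: smooth_add smooth_mult smooth_act simp: u1_def u2_def v1_def v2_def)
  have sA: "smooth (act U UV)" and sB: "smooth (act V UU)"
    using s sUV sUU by (auto intro!: smooth_act simp: u1_def u2_def v1_def v2_def)
  have "tint (\<lambda>z. U z \<bullet> lie_bracket U V z) = tint (\<lambda>z. (nabla U U z \<bullet> V z - act U UV z) + (1/2) * act V UU z)"
    using pw by simp
  also have "\<dots> = tint (\<lambda>z. nabla U U z \<bullet> V z - act U UV z) + tint (\<lambda>z. (1/2) * act V UU z)"
    by (rule tint_add) (intro smooth_diff2 smooth_cmul sN sA sB)+
  also have "\<dots> = (tint (\<lambda>z. nabla U U z \<bullet> V z) - tint (act U UV)) + (1/2) * tint (act V UU)"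
    unfolding tint_diff[OF sN sA] tint_cmul ..
  also have "\<dots> = tint (\<lambda>z. nabla U U z \<bullet> V z)"
    using tint_act_zero[OF U tUV] tint_act_zero[OF V tUU] by simp
  finally show ?thesis .
qed

lemma identII:
  assumes V: "V \<in> Xsigma" and tp: "tfun p"
  shows "tint (\<lambda>z. grad p z \<bullet> V z) = 0"
proof -
  have "(\<lambda>z. grad p z \<bullet> V z) = act V p"
    unfolding grad_def sharp_def dfun_def act_def inner_pt by (auto simp: algebra_simps)
  then show ?thesis using tint_act_zero[OF V tp] by simp
qed

lemma identIII:
  assumes cf: "closed_form \<alpha>" and coc: "is_2cocycle (omega \<alpha>)" and U: "U \<in> Xsigma" and V: "V \<in> Xsigma"
  shows "omega \<alpha> U V = tint (\<lambda>z. (psi U z *\<^sub>R sharp \<alpha> z) \<bullet> V z)"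
proof -
  obtain f where tf: "tfun f" and mf: "tint f = 0" and Uf: "\<And>z. U z = mvec U + ham f z"
    using ham_decomp[OF U] by blast
  obtain h where th: "tfun h" and mh: "tint h = 0" and Vh: "\<And>z. V z = mvec V + ham h z"
    using ham_decomp[OF V] by blast
  have pU: "psi U = f" by (rule psi_eq[OF U tf mf Uf])
  have hU: "ham_part U = f" by (rule ham_part_eq[OF tf mf Uf])
  have hV: "ham_part V = h" by (rule ham_part_eq[OF th mh Vh])
  define a0 where "a0 = tint (\<lambda>w. fst (\<alpha> w))"
  define b0 where "b0 = tint (\<lambda>w. snd (\<alpha> w))"
  have al: "\<alpha> z = (a0, b0)" for z unfolding a0_def b0_def by (rule alpha_const[OF cf coc])
  define c1 where "c1 = fst (mvec V)"
  define c2 where "c2 = snd (mvec V)"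
  have sf: "smooth f" and sh: "smooth h" using tf th tfun_smooth by blast+
  have sE: "smooth (\<lambda>z. f z * (a0 * Dy h z - b0 * Dx h z))"
    by (intro smooth_mult smooth_diff2 smooth_cmul smooth_Dx smooth_Dy sf sh)
  have "omega \<alpha> U V = tint (\<lambda>z. f z * (a0 * Dy h z - b0 * Dx h z))"
    unfolding omega_def hU hV eval1_def al by (simp add: ham_def algebra_simps)
  also have "\<dots> = (a0 * c1 + b0 * c2) * tint f + tint (\<lambda>z. f z * (a0 * Dy h z - b0 * Dx h z))"
    using mf by simp
  also have "\<dots> = tint (\<lambda>z. (a0 * c1 + b0 * c2) * f z + f z * (a0 * Dy h z - b0 * Dx h z))"
    using tint_add[OF smooth_cmul[OF sf] sE] by (simp add: tint_cmul)
  also have "\<dots> = tint (\<lambda>z. (psi U z *\<^sub>R sharp \<alpha> z) \<bullet> V z)"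
  proof -
    have "(psi U z *\<^sub>R sharp \<alpha> z) \<bullet> V z = (a0 * c1 + b0 * c2) * f z + f z * (a0 * Dy h z - b0 * Dx h z)" for z
      unfolding pU sharp_def al inner_pt Vh[of z]
      by (simp add: ham_def algebra_simps c1_def c2_def)
    then show ?thesis by simp
  qed
  finally show ?thesis .
qed

lemma sq_zero:
  assumes tk: "tfun k" and i0: "tint (\<lambda>z. k z * k z) = 0"
  shows "k z = 0"
proof -
  have sk: "smooth k" using tk tfun_smooth by blast
  have skk: "smooth (\<lambda>z. k z * k z)" by (intro smooth_mult sk)
  have hi: "((\<lambda>z. k z * k z) has_integral 0) (cbox (0,0) (1,1))"
    using integrable_integral[OF tint_integrable[OF skk]] i0 unfolding tint_def by simp
  have ne: "box (0::real, 0::real) (1, 1) \<noteq> {}"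
  proof -
    have "(1/2::real, 1/2::real) \<in> box (0, 0) (1, 1)" by (simp add: box_pair_iff)
    then show ?thesis by blast
  qed
  have "(\<lambda>z. k z * k z) w = 0" if w: "w \<in> cbox (0,0) (1,1)" for w
    by (rule has_integral_0_cbox_imp_0[OF cont_tint[OF skk] _ hi ne w]) simp
  then have "k w = 0" if "w \<in> cbox (0,0) (1,1)" for w using that by simp
  then show ?thesis by (rule periodic_ext[OF tfun_periodic[OF tk]])
qed

lemma hodge:
  assumes vW: "vf W" and orth: "\<And>V. V \<in> Xsigma \<Longrightarrow> tint (\<lambda>z. W z \<bullet> V z) = 0"
  shows "\<exists>p. tfun p \<and> (\<forall>z. W z = grad p z)"
proof -
  define W1 where "W1 = (\<lambda>w. fst (W w))"
  define W2 where "W2 = (\<lambda>w. snd (W w))"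
  have t1: "tfun W1" and t2: "tfun W2" using vW unfolding vf_def W1_def W2_def by auto
  have s1: "smooth W1" and s2: "smooth W2" using t1 t2 tfun_smooth by blast+
  have m1: "tint W1 = 0" using orth[OF const_in_Xsigma[of "(1,0)"]] unfolding W1_def inner_pt by simp
  have m2: "tint W2 = 0" using orth[OF const_in_Xsigma[of "(0,1)"]] unfolding W2_def inner_pt by simp
  define k where "k z = Dx W2 z - Dy W1 z" for z
  have tk: "tfun k" unfolding k_def[abs_def] by (intro tfun_diff tfun_Dx tfun_Dy t1 t2)
  have sk: "smooth k" using tk tfun_smooth by blast
  have "0 = tint (\<lambda>z. W z \<bullet> ham k z)" using orth[OF ham_in_Xsigma[OF tk]] by simp
  also have "\<dots> = tint (\<lambda>z. W1 z * Dy k z - W2 z * Dx k z)"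
    unfolding inner_pt ham_def W1_def W2_def by simp
  also have "\<dots> = tint (\<lambda>z. W1 z * Dy k z) - tint (\<lambda>z. W2 z * Dx k z)"
    by (rule tint_diff) (intro smooth_mult smooth_Dx smooth_Dy s1 s2 sk)+
  also have "\<dots> = - tint (\<lambda>z. Dy W1 z * k z) + tint (\<lambda>z. Dx W2 z * k z)"
    using tint_parts_y[OF t1 tk] tint_parts_x[OF t2 tk] by simp
  also have "\<dots> = tint (\<lambda>z. Dx W2 z * k z) - tint (\<lambda>z. Dy W1 z * k z)" by simp
  also have "\<dots> = tint (\<lambda>z. Dx W2 z * k z - Dy W1 z * k z)"
    by (rule tint_diff[symmetric]) (intro smooth_mult smooth_Dx smooth_Dy s1 s2 sk)+
  also have "\<dots> = tint (\<lambda>z. k z * k z)" unfolding k_def by (simp add: algebra_simps)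
  finally have "tint (\<lambda>z. k z * k z) = 0" by simp
  then have k0: "k z = 0" for z by (rule sq_zero[OF tk])
  have curl: "Dy W1 z = Dx W2 z" for z using k0[of z] unfolding k_def by simp
  obtain p where p: "tfun p" "\<And>z. Dx p z = W1 z" "\<And>z. Dy p z = W2 z"
    using poincare[OF t1 t2 m1 m2 curl] by blast
  have "W z = grad p z" for z unfolding grad_def sharp_def dfun_def p W1_def W2_def by simp
  then show ?thesis using p(1) by blast
qed

lemma Dir_emb:
  assumes "G differentiable (at (t, z))"
  shows "Dir v (\<lambda>w. G (t, w)) z = Dir (0, v) G (t, z)"
proof -
  have h1: "((\<lambda>w. (t, w)) has_derivative (\<lambda>v. (0, v))) (at z)"
    by (auto intro!: derivative_eq_intros)
  show ?thesis using Dir_eq[OF has_derivative_compose[OF h1 Dir_works[OF assms]]] by simp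
qed

lemma deriv_time:
  assumes "\<And>q. G differentiable (at q)"
  shows "deriv (\<lambda>s. G (s, z)) t = Dir (1, 0) G (t, z)"
proof -
  have "((\<lambda>s. G ((0, z) + s *\<^sub>R (1, 0))) has_real_derivative Dir (1, 0) G ((0, z) + t *\<^sub>R (1, 0))) (at t within UNIV)"
    by (rule line_deriv[OF assms])
  then have "((\<lambda>s. G (s, z)) has_real_derivative Dir (1, 0) G (t, z)) (at t)" by simp
  then show ?thesis by (rule DERIV_imp_deriv)
qed

lemma dt_div:
  assumes sc: "smooth_curve u"
  shows "divg (dt u t) z = 0"
proof -
  define F1 where "F1 = (\<lambda>(t, z). fst (u t z))"
  define F2 where "F2 = (\<lambda>(t, z). snd (u t z))"
  have s1: "smooth F1" and s2: "smooth F2" using sc unfolding smooth_curve_def F1_def F2_def by auto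
  have Xs: "u s \<in> Xsigma" for s using sc unfolding smooth_curve_def by auto
  define et :: "real \<times> pt" where "et = (1, 0)"
  define ex :: "real \<times> pt" where "ex = (0, (1, 0))"
  define ey :: "real \<times> pt" where "ey = (0, (0, 1))"
  have st1: "smooth (Dir et F1)" and st2: "smooth (Dir et F2)" using s1 s2 smooth_Dir by blast+
  have dt1: "(\<lambda>w. fst (dt u t w)) = (\<lambda>w. Dir et F1 (t, w))"
  proof
    fix w
    have "deriv (\<lambda>s. F1 (s, w)) t = Dir (1, 0) F1 (t, w)" by (rule deriv_time[OF smooth_diff[OF s1]])
    then show "fst (dt u t w) = Dir et F1 (t, w)" unfolding dt_def et_def F1_def by simp
  qed
  have dt2: "(\<lambda>w. snd (dt u t w)) = (\<lambda>w. Dir et F2 (t, w))"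
  proof
    fix w
    have "deriv (\<lambda>s. F2 (s, w)) t = Dir (1, 0) F2 (t, w)" by (rule deriv_time[OF smooth_diff[OF s2]])
    then show "snd (dt u t w) = Dir et F2 (t, w)" unfolding dt_def et_def F2_def by simp
  qed
  have "divg (dt u t) z = Dir ex (Dir et F1) (t, z) + Dir ey (Dir et F2) (t, z)"
    unfolding divg_def dt1 dt2 Dx_def Dy_def ex_def ey_def
    using Dir_emb[OF smooth_diff[OF st1]] Dir_emb[OF smooth_diff[OF st2]] by simp
  also have "\<dots> = Dir et (Dir ex F1) (t, z) + Dir et (Dir ey F2) (t, z)"
    using schwarz[OF s1] schwarz[OF s2] by simp
  also have "\<dots> = Dir et (\<lambda>q. Dir ex F1 q + Dir ey F2 q) (t, z)"
    by (rule Dir_add[symmetric]) (intro smooth_diff smooth_Dir s1 s2)+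
  also have "(\<lambda>q. Dir ex F1 q + Dir ey F2 q) = (\<lambda>q. 0)"
  proof
    fix q :: "real \<times> pt"
    obtain s w where q: "q = (s, w)" by (cases q)
    have e1: "Dir ex F1 (s, w) = Dx (\<lambda>w. fst (u s w)) w"
      unfolding Dx_def ex_def using Dir_emb[where G=F1 and t=s and z=w and v="(1,0)", OF smooth_diff[OF s1]] by (simp add: F1_def)
    have e2: "Dir ey F2 (s, w) = Dy (\<lambda>w. snd (u s w)) w"
      unfolding Dy_def ey_def using Dir_emb[where G=F2 and t=s and z=w and v="(0,1)", OF smooth_diff[OF s2]] by (simp add: F2_def)
    show "Dir ex F1 q + Dir ey F2 q = 0" unfolding q e1 e2 using Xsigma_D(3)[OF Xs[of s]] by simp
  qed
  also have "Dir et (\<lambda>q. 0) (t, z) = 0" by (rule Dir_const)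
  finally show ?thesis .
qed

lemma alg1: "- z - n - p = (g::'a::ab_group_add) \<Longrightarrow> z = - n - p - g"
proof -
  assume h: "- z - n - p = g"
  show "z = - n - p - g" unfolding h[symmetric] by (simp add: algebra_simps)
qed

lemma vf_add: "vf A \<Longrightarrow> vf B \<Longrightarrow> vf (\<lambda>z. A z + B z)"
  unfolding vf_def by (simp add: tfun_add)
lemma vf_diff: "vf A \<Longrightarrow> vf B \<Longrightarrow> vf (\<lambda>z. A z - B z)"
  unfolding vf_def by (simp add: tfun_diff)
lemma vf_uminus: "vf A \<Longrightarrow> vf (\<lambda>z. - A z)"
  unfolding vf_def by (simp add: tfun_uminus)
lemma vf_Xs: "X \<in> Xsigma \<Longrightarrow> vf X" unfolding Xsigma_def by blast
lemma vf_nabla: "U \<in> Xsigma \<Longrightarrow> vf (nabla U U)"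
  using Xsigma_D unfolding vf_def nabla_def by (simp add: tfun_act)
lemma tfun_psi: "U \<in> Xsigma \<Longrightarrow> tfun (psi U)"
  using ham_decomp psi_eq by metis
lemma vf_P: "U \<in> Xsigma \<Longrightarrow> closed_form \<alpha> \<Longrightarrow> vf (\<lambda>z. psi U z *\<^sub>R sharp \<alpha> z)"
  using tfun_psi closed_form_D unfolding vf_def sharp_def by (simp add: tfun_mult)
lemma vf_grad: "tfun p \<Longrightarrow> vf (grad p)"
  unfolding vf_def grad_def sharp_def dfun_def by (simp add: tfun_Dx tfun_Dy)

lemma smooth_inner: "vf A \<Longrightarrow> vf B \<Longrightarrow> smooth (\<lambda>z. A z \<bullet> B z)"
  unfolding vf_def inner_pt by (intro smooth_add smooth_mult tfun_smooth; simp)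

lemma tint_inner_diff: "vf A \<Longrightarrow> vf B \<Longrightarrow> vf V \<Longrightarrow>
   tint (\<lambda>z. (A z - B z) \<bullet> V z) = tint (\<lambda>z. A z \<bullet> V z) - tint (\<lambda>z. B z \<bullet> V z)"
  using tint_diff[OF smooth_inner smooth_inner] by (simp add: inner_diff_left)
lemma tint_inner_add: "vf A \<Longrightarrow> vf B \<Longrightarrow> vf V \<Longrightarrow>
   tint (\<lambda>z. (A z + B z) \<bullet> V z) = tint (\<lambda>z. A z \<bullet> V z) + tint (\<lambda>z. B z \<bullet> V z)"
  using tint_add[OF smooth_inner smooth_inner] by (simp add: inner_add_left)

definition econd :: "(pt \<Rightarrow> pt) \<Rightarrow> (pt \<Rightarrow> pt) \<Rightarrow> (pt \<Rightarrow> pt) \<Rightarrow> bool" where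
  "econd \<alpha> U Z \<longleftrightarrow> (\<lambda>w. - Z w) \<in> Xsigma \<and>
     (\<forall>V\<in>Xsigma. tint (\<lambda>w. (- Z w) \<bullet> V w) = omega \<alpha> U V + tint (\<lambda>w. U w \<bullet> lie_bracket U V w))"

lemma econd_A:
  assumes cf: "closed_form \<alpha>" and coc: "is_2cocycle (omega \<alpha>)" and U: "U \<in> Xsigma"
    and ec: "econd \<alpha> U Z"
  shows "\<exists>p. tfun p \<and> (\<forall>z. Z z = - nabla U U z - psi U z *\<^sub>R sharp \<alpha> z - grad p z)"
proof -
  define X0 where "X0 = (\<lambda>w. - Z w)"
  define N where "N = nabla U U"
  define P where "P = (\<lambda>z. psi U z *\<^sub>R sharp \<alpha> z)"
  have X0: "X0 \<in> Xsigma" and o: "\<And>V. V \<in> Xsigma \<Longrightarrow> tint (\<lambda>w. X0 w \<bullet> V w) = omega \<alpha> U V + tint (\<lambda>w. U w \<bullet> lie_bracket U V w)"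
    using ec unfolding econd_def X0_def by auto
  have vX: "vf X0" using vf_Xs[OF X0] .
  have vN: "vf N" unfolding N_def by (rule vf_nabla[OF U])
  have vP: "vf P" unfolding P_def by (rule vf_P[OF U cf])
  define W where "W z = X0 z - N z - P z" for z
  have vXN: "vf (\<lambda>z. X0 z - N z)" by (rule vf_diff[OF vX vN])
  have vW: "vf W" unfolding W_def[abs_def] by (rule vf_diff[OF vXN vP])
  have "tint (\<lambda>z. W z \<bullet> V z) = 0" if V: "V \<in> Xsigma" for V
  proof -
    have vV: "vf V" by (rule vf_Xs[OF V])
    have "tint (\<lambda>z. W z \<bullet> V z) = tint (\<lambda>z. (X0 z - N z) \<bullet> V z) - tint (\<lambda>z. P z \<bullet> V z)"
      unfolding W_def by (rule tint_inner_diff[OF vXN vP vV])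
    also have "\<dots> = tint (\<lambda>z. X0 z \<bullet> V z) - tint (\<lambda>z. N z \<bullet> V z) - tint (\<lambda>z. P z \<bullet> V z)"
      using tint_inner_diff[OF vX vN vV] by simp
    also have "\<dots> = 0"
      using o[OF V] identI[OF U V] identIII[OF cf coc U V] unfolding N_def P_def by simp
    finally show ?thesis .
  qed
  then obtain p where tp: "tfun p" and hp: "\<And>z. W z = grad p z" using hodge[OF vW] by blast
  have "Z z = - nabla U U z - psi U z *\<^sub>R sharp \<alpha> z - grad p z" for z
    using alg1[OF hp[of z, unfolded W_def X0_def]] unfolding N_def P_def .
  then show ?thesis using tp by blast
qed

lemma econd_B:
  assumes cf: "closed_form \<alpha>" and coc: "is_2cocycle (omega \<alpha>)" and U: "U \<in> Xsigma"
    and tp: "tfun p" and hZ: "\<And>z. Z z = - nabla U U z - psi U z *\<^sub>R sharp \<alpha> z - grad p z"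
    and dZ: "\<And>z. divg Z z = 0"
  shows "econd \<alpha> U Z"
proof -
  define N where "N = nabla U U"
  define P where "P = (\<lambda>z. psi U z *\<^sub>R sharp \<alpha> z)"
  define G where "G = grad p"
  have vN: "vf N" unfolding N_def by (rule vf_nabla[OF U])
  have vP: "vf P" unfolding P_def by (rule vf_P[OF U cf])
  have vG: "vf G" unfolding G_def by (rule vf_grad[OF tp])
  have eX0: "(\<lambda>w. - Z w) = (\<lambda>w. (N w + P w) + G w)"
  proof (rule ext)
    fix w show "- Z w = (N w + P w) + G w" unfolding hZ[of w] N_def P_def G_def by (simp add: algebra_simps)
  qed
  have vNP: "vf (\<lambda>w. N w + P w)" by (rule vf_add[OF vN vP])
  have vX0: "vf (\<lambda>w. - Z w)" unfolding eX0 by (rule vf_add[OF vNP vG])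
  have vZ: "vf Z" using vf_uminus[OF vX0] by simp
  have sZ1: "smooth (\<lambda>w. fst (Z w))" and sZ2: "smooth (\<lambda>w. snd (Z w))"
    using vZ unfolding vf_def using tfun_smooth by blast+
  have "divg (\<lambda>w. - Z w) z = 0" for z
    using dZ[of z] unfolding divg_def by (simp add: Dx_uminus[OF sZ1] Dy_uminus[OF sZ2])
  then have X0: "(\<lambda>w. - Z w) \<in> Xsigma" using vX0 unfolding Xsigma_def by blast
  have "tint (\<lambda>w. (- Z w) \<bullet> V w) = omega \<alpha> U V + tint (\<lambda>w. U w \<bullet> lie_bracket U V w)"
    if V: "V \<in> Xsigma" for V
  proof -
    have vV: "vf V" by (rule vf_Xs[OF V])
    have e2: "- Z w = (N w + P w) + G w" for w using fun_cong[OF eX0, of w] by simp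
    have "tint (\<lambda>w. (- Z w) \<bullet> V w) = tint (\<lambda>w. ((N w + P w) + G w) \<bullet> V w)"
      by (simp only: e2)
    also have "\<dots> = tint (\<lambda>w. N w \<bullet> V w) + tint (\<lambda>w. P w \<bullet> V w) + tint (\<lambda>w. G w \<bullet> V w)"
      using tint_inner_add[OF vNP vG vV] tint_inner_add[OF vN vP vV] by simp
    also have "\<dots> = omega \<alpha> U V + tint (\<lambda>w. U w \<bullet> lie_bracket U V w)"
      using identI[OF U V] identIII[OF cf coc U V] identII[OF V tp] unfolding N_def P_def G_def by simp
    finally show ?thesis .
  qed
  then show ?thesis unfolding econd_def using X0 by blast
qed

lemma euler_t_iff:
  "(\<exists>z. ad_transpose_app \<alpha> (1, U) z \<and> (0, Z) = ext_neg z) \<longleftrightarrow> econd \<alpha> U Z"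
proof
  assume "\<exists>z. ad_transpose_app \<alpha> (1, U) z \<and> (0, Z) = ext_neg z"
  then obtain z where ad: "ad_transpose_app \<alpha> (1, U) z" and ne: "(0, Z) = ext_neg z" by blast
  have fz: "fst z = 0" and sz: "snd z = (\<lambda>w. - Z w)"
    using ne unfolding ext_neg_def by (auto simp: fun_eq_iff)
  have zA: "z \<in> ext_alg" and io: "\<And>v. v \<in> ext_alg \<Longrightarrow> ext_inner z v = ext_inner (1, U) (ext_bracket \<alpha> (1, U) v)"
    using ad unfolding ad_transpose_app_def by auto
  have X0: "(\<lambda>w. - Z w) \<in> Xsigma" using zA sz unfolding ext_alg_def by auto
  have "tint (\<lambda>w. (- Z w) \<bullet> V w) = omega \<alpha> U V + tint (\<lambda>w. U w \<bullet> lie_bracket U V w)"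
    if V: "V \<in> Xsigma" for V
    using io[of "(0, V)"] V fz sz unfolding ext_alg_def ext_inner_def ext_bracket_def by simp
  then show "econd \<alpha> U Z" unfolding econd_def using X0 by blast
next
  assume ec: "econd \<alpha> U Z"
  define z where "z = (0::real, \<lambda>w. - Z w)"
  have "ad_transpose_app \<alpha> (1, U) z"
    unfolding ad_transpose_app_def
  proof (intro conjI ballI)
    show "z \<in> ext_alg" using ec unfolding econd_def ext_alg_def z_def by auto
    fix v assume "v \<in> ext_alg"
    then have "snd v \<in> Xsigma" unfolding ext_alg_def by auto
    then show "ext_inner z v = ext_inner (1, U) (ext_bracket \<alpha> (1, U) v)"
      using ec unfolding econd_def ext_inner_def ext_bracket_def z_def by simp
  qed
  moreover have "(0, Z) = ext_neg z" unfolding ext_neg_def z_def by simp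
  ultimately show "\<exists>z. ad_transpose_app \<alpha> (1, U) z \<and> (0, Z) = ext_neg z" by blast
qed

theorem proposition15p1:
  fixes \<alpha> :: "pt \<Rightarrow> pt" and u :: "real \<Rightarrow> pt \<Rightarrow> pt"
  assumes "closed_form \<alpha>"
    and "is_2cocycle (omega \<alpha>)"
    and "smooth_curve u"
  shows "euler_eq \<alpha> (\<lambda>t. 1) u \<longleftrightarrow>
         (\<exists>p :: real \<Rightarrow> pt \<Rightarrow> real. (\<forall>t. tfun (p t)) \<and>
            (\<forall>t z. dt u t z = - nabla (u t) (u t) z - psi (u t) z *\<^sub>R sharp \<alpha> z - grad (p t) z))"
proof -
  have Us: "u t \<in> Xsigma" for t using assms(3) unfolding smooth_curve_def by auto
  have e: "euler_eq \<alpha> (\<lambda>t. 1) u \<longleftrightarrow> (\<forall>t. econd \<alpha> (u t) (dt u t))"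
    unfolding euler_eq_def euler_t_iff[symmetric] by simp
  show ?thesis
  proof
    assume "euler_eq \<alpha> (\<lambda>t. 1) u"
    then have "\<forall>t. econd \<alpha> (u t) (dt u t)" using e by blast
    then have "\<forall>t. \<exists>p. tfun p \<and> (\<forall>z. dt u t z = - nabla (u t) (u t) z - psi (u t) z *\<^sub>R sharp \<alpha> z - grad p z)"
      using econd_A[OF assms(1,2) Us] by blast
    then show "\<exists>p :: real \<Rightarrow> pt \<Rightarrow> real. (\<forall>t. tfun (p t)) \<and>
            (\<forall>t z. dt u t z = - nabla (u t) (u t) z - psi (u t) z *\<^sub>R sharp \<alpha> z - grad (p t) z)"
      by (rule choice[THEN exE]) blast
  next
    assume "\<exists>p :: real \<Rightarrow> pt \<Rightarrow> real. (\<forall>t. tfun (p t)) \<and>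
            (\<forall>t z. dt u t z = - nabla (u t) (u t) z - psi (u t) z *\<^sub>R sharp \<alpha> z - grad (p t) z)"
    then obtain p where tp: "\<And>t. tfun (p t)"
      and hp: "\<And>t z. dt u t z = - nabla (u t) (u t) z - psi (u t) z *\<^sub>R sharp \<alpha> z - grad (p t) z" by blast
    have "econd \<alpha> (u t) (dt u t)" for t
      by (rule econd_B[OF assms(1,2) Us tp hp dt_div[OF assms(3)]])
    then show "euler_eq \<alpha> (\<lambda>t. 1) u" using e by blast
  qed
qed

end
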